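(* Let $A_1,\dots,A_n,B_1,\dots,B_n$ be positive definite matrices with $mI\le A_i,B_i\le MI$ for all $i$ and some scalars $0<m<M$, and put $h=M/m$. Then for all $p\in(-\infty,1]\setminus\{0\}$, \[K(h,p)^{1/p}\Big(\mathrm{Tr}\Big[\Big(\sum_{i=1}^nA_i^p\Big)^{1/p}\Big]+\mathrm{Tr}\Big[\Big(\sum_{i=1}^nB_i^p\Big)^{1/p}\Big]\Big)\le\mathrm{Tr}\Big[\Big(\sum_{i=1}^n(A_i+B_i)^p\Big)^{1/p}\Big]\le K(h,p)^{-1/p}\Big(\mathrm{Tr}\Big[\Big(\sum_{i=1}^nA_i^p\Big)^{1/p}\Big]+\mathrm{Tr}\Big[\Big(\sum_{i=1}^nB_i^p\Big)^{1/p}\Big]\Big),\] and for all $p\ge1$, \[K(h,p)^{-1/p}\Big(\mathrm{Tr}\Big[\Big(\sum_{i=1}^nA_i^p\Big)^{1/p}\Big]+\mathrm{Tr}\Big[\Big(\sum_{i=1}^nB_i^p\Big)^{1/p}\Big]\Big)\le\mathrm{Tr}\Big[\Big(\sum_{i=1}^n(A_i+B_i)^p\Big)^{1/p}\Big]\le K(h,p)^{1/p}\Big(\mathrm{Tr}\Big[\Big(\sum_{i=1}^nA_i^p\Big)^{1/p}\Big]+\mathrm{Tr}\Big[\Big(\sum_{i=1}^nB_i^p\Big)^{1/p}\Big]\Big).\]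
   Context: $\mathrm{Tr}$ is the trace, $\le$ the Löwner order. Generalized Kantorovich constant: $K(h,p)=\frac{h^p-h}{(p-1)(h-1)}\Big(\frac{p-1}{p}\frac{h^p-1}{h^p-h}\Big)^p$ (with $K(h,1)=1$ by continuity). *)

theory Defs
  imports "Jordan_Normal_Form.Matrix"
begin

definition cadj :: "complex mat \<Rightarrow> complex mat" where
  "cadj A = mat (dim_col A) (dim_row A) (\<lambda>(i,j). cnj (A $$ (j,i)))"

definition mtrace :: "complex mat \<Rightarrow> complex" where
  "mtrace A = (\<Sum>i<dim_row A. A $$ (i,i))"

definition hermitian :: "nat \<Rightarrow> complex mat \<Rightarrow> bool" where
  "hermitian d A \<longleftrightarrow> A \<in> carrier_mat d d \<and> cadj A = A"

definition unitary :: "nat \<Rightarrow> complex mat \<Rightarrow> bool" where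
  "unitary d U \<longleftrightarrow> U \<in> carrier_mat d d \<and> U * cadj U = 1\<^sub>m d \<and> cadj U * U = 1\<^sub>m d"

definition qform :: "complex mat \<Rightarrow> complex vec \<Rightarrow> complex" where
  "qform A v = conjugate v \<bullet> (A *\<^sub>v v)"

definition pos_semidef :: "nat \<Rightarrow> complex mat \<Rightarrow> bool" where
  "pos_semidef d A \<longleftrightarrow> hermitian d A \<and> (\<forall>v \<in> carrier_vec d. 0 \<le> Re (qform A v))"

definition pos_def :: "nat \<Rightarrow> complex mat \<Rightarrow> bool" where
  "pos_def d A \<longleftrightarrow> hermitian d A \<and> (\<forall>v \<in> carrier_vec d. v \<noteq> 0\<^sub>v d \<longrightarrow> 0 < Re (qform A v))"

definition loewner_le :: "nat \<Rightarrow> complex mat \<Rightarrow> complex mat \<Rightarrow> bool" where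
  "loewner_le d A B \<longleftrightarrow> hermitian d A \<and> hermitian d B \<and> pos_semidef d (B - A)"

text \<open>Functional calculus: f(A) = U diag(f(lambda_i)) U^* where A = U diag(lambda_i) U^*
 with U unitary and lambda_i real (spectral theorem; the result is independent of the
 decomposition).\<close>
definition mat_fun :: "nat \<Rightarrow> (real \<Rightarrow> real) \<Rightarrow> complex mat \<Rightarrow> complex mat" where
  "mat_fun d f A = (THE X. \<exists>U lam. unitary d U \<and>
      A = U * mat_diag d (\<lambda>i. complex_of_real (lam i)) * cadj U \<and>
      X = U * mat_diag d (\<lambda>i. complex_of_real (f (lam i))) * cadj U)"

definition mat_powr :: "nat \<Rightarrow> complex mat \<Rightarrow> real \<Rightarrow> complex mat" where
  "mat_powr d A p = mat_fun d (\<lambda>x. x powr p) A"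

fun msum :: "nat \<Rightarrow> (nat \<Rightarrow> complex mat) \<Rightarrow> nat \<Rightarrow> complex mat" where
  "msum d f 0 = 0\<^sub>m d d"
| "msum d f (Suc k) = msum d f k + f k"

definition Kant :: "real \<Rightarrow> real \<Rightarrow> real" where
  "Kant h p = (if p = 1 then 1 else
     (h powr p - h) / ((p - 1) * (h - 1)) * (((p - 1) / p) * ((h powr p - 1) / (h powr p - h))) powr p)"

end

theory Submission
  imports Defs "Jordan_Normal_Form.Schur_Decomposition"
begin

lemma cadj_dims[simp]: "dim_row (cadj A) = dim_col A" "dim_col (cadj A) = dim_row A"
  by (auto simp: cadj_def)

lemma cadj_carrier[simp]: "A \<in> carrier_mat n m \<Longrightarrow> cadj A \<in> carrier_mat m n"
  by (auto simp: cadj_def)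

lemma cadj_index[simp]: "i < dim_col A \<Longrightarrow> j < dim_row A \<Longrightarrow> cadj A $$ (i,j) = cnj (A $$ (j,i))"
  by (auto simp: cadj_def)

lemma cadj_cadj[simp]: "cadj (cadj A) = A"
  by (rule eq_matI) auto

lemma cadj_mult: assumes "A \<in> carrier_mat n k" "B \<in> carrier_mat k m"
  shows "cadj (A * B) = cadj B * cadj A"
  using assms by (intro eq_matI) (auto simp: scalar_prod_def cadj_def cnj_sum mult.commute)

lemma cadj_one[simp]: "cadj (1\<^sub>m n) = 1\<^sub>m n"
  by (rule eq_matI) auto

lemma assoc4: assumes "A \<in> carrier_mat n n" "B \<in> carrier_mat n n" "C \<in> carrier_mat n n" "D \<in> carrier_mat n n"
  shows "A * B * (C * D) = A * (B * C) * D"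
proof -
  have "A * B * (C * D) = A * B * C * D"
    using assoc_mult_mat[of "A*B" n n C n D n] assms by simp
  also have "A * B * C = A * (B * C)"
    using assoc_mult_mat[of A n n B n C n] assms by simp
  finally show ?thesis .
qed

lemma unitary_mult: assumes "unitary n U" "unitary n V" shows "unitary n (U * V)"
proof -
  have U: "U \<in> carrier_mat n n" and V: "V \<in> carrier_mat n n" using assms unfolding unitary_def by auto
  have "U * V * cadj (U * V) = U * V * (cadj V * cadj U)"
    using U V by (simp add: cadj_mult)
  also have "\<dots> = U * (V * cadj V) * cadj U"
    using U V by (intro assoc4) auto
  also have "\<dots> = 1\<^sub>m n" using assms U unfolding unitary_def by simp
  finally have 1: "U * V * cadj (U * V) = 1\<^sub>m n" .
  have "cadj (U * V) * (U * V) = cadj V * cadj U * (U * V)"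
    using U V by (simp add: cadj_mult)
  also have "\<dots> = cadj V * (cadj U * U) * V"
    using U V by (intro assoc4) auto
  also have "\<dots> = 1\<^sub>m n" using assms V unfolding unitary_def by simp
  finally show ?thesis using 1 U V unfolding unitary_def by auto
qed

definition nrm :: "complex vec \<Rightarrow> complex vec" where
  "nrm w = complex_of_real (1 / sqrt (Re (w \<bullet>c w))) \<cdot>\<^sub>v w"

lemma cscalar_real: fixes w :: "complex vec" shows "w \<bullet>c w = complex_of_real (Re (w \<bullet>c w))"
  using conjugate_square_ge_0_vec[of w] by (simp add: less_eq_complex_def complex_eq_iff)

lemma cscalar_smult: fixes v w :: "complex vec"
  assumes "v \<in> carrier_vec n" "w \<in> carrier_vec n"
  shows "(a \<cdot>\<^sub>v v) \<bullet>c (b \<cdot>\<^sub>v w) = a * cnj b * (v \<bullet>c w)"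
  using assms by (simp add: scalar_prod_def sum_distrib_left algebra_simps)

lemma nrm_carrier[simp]: "w \<in> carrier_vec n \<Longrightarrow> nrm w \<in> carrier_vec n"
  by (simp add: nrm_def)

lemma nrm_cscalar: assumes w: "w \<in> carrier_vec n" and w0: "w \<bullet>c w \<noteq> 0"
  shows "nrm w \<bullet>c nrm w = 1"
proof -
  let ?r = "Re (w \<bullet>c w)"
  have r: "?r > 0" using conjugate_square_ge_0_vec[of w] w0
    by (auto simp: less_eq_complex_def complex_eq_iff)
  have "nrm w \<bullet>c nrm w = complex_of_real (1 / sqrt ?r) * complex_of_real (1 / sqrt ?r) * (w \<bullet>c w)"
    unfolding nrm_def using cscalar_smult[OF w w, of "complex_of_real (1 / sqrt ?r)" "complex_of_real (1 / sqrt ?r)"] by simp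
  also have "\<dots> = complex_of_real ((1 / sqrt ?r) * (1 / sqrt ?r) * ?r)"
    using arg_cong[OF cscalar_real[of w], of "\<lambda>z. complex_of_real (1 / sqrt ?r) * complex_of_real (1 / sqrt ?r) * z"]
    by (simp only: of_real_mult)
  also have "(1 / sqrt ?r) * (1 / sqrt ?r) * ?r = 1" using r
  proof -
    have "sqrt ?r * sqrt ?r = ?r" using r by simp
    moreover have "sqrt ?r > 0" using r by simp
    ultimately show ?thesis by (simp add: field_simps)
  qed
  hence "complex_of_real ((1 / sqrt ?r) * (1 / sqrt ?r) * ?r) = 1" by simp
  finally show ?thesis .
qed

lemma nrm_orth: assumes "v \<in> carrier_vec n" "w \<in> carrier_vec n" "v \<bullet>c w = 0"
  shows "nrm v \<bullet>c nrm w = 0"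
  using assms unfolding nrm_def by (simp add: cscalar_smult[OF assms(1,2)])

lemma nrm_id: assumes "w \<in> carrier_vec n" "w \<bullet>c w = 1" shows "nrm w = w"
  using assms unfolding nrm_def by simp

lemma unitary_completion:
  assumes u: "u \<in> carrier_vec n" and u1: "u \<bullet>c u = 1"
  shows "\<exists>W. unitary n W \<and> col W 0 = u"
proof -
  interpret cof_vec_space n "TYPE(complex)" .
  have u0: "u \<noteq> 0\<^sub>v n" using u1 by auto
  define b where "b = basis_completion u"
  from basis_completion[OF u u0, folded b_def]
  have dist_b: "distinct b" and indep: "\<not> lin_dep (set b)" and bc: "set b \<subseteq> carrier_vec n"
    and hdb: "hd b = u" and len_b: "length b = n" by auto
  have n0: "n > 0" using u u0 by (cases n) auto
  from hdb len_b n0 obtain vs where bv: "b = u # vs" by (cases b, auto)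
  define ws where "ws = gram_schmidt n b"
  from gram_schmidt_result[OF bc dist_b indep ws_def]
  have orth: "corthogonal ws" and wsc: "set ws \<subseteq> carrier_vec n" and len: "length ws = n"
    using len_b by auto
  have hdws: "hd ws = u" unfolding ws_def bv using u by simp
  define W where "W = mat_of_cols n (map nrm ws)"
  have W: "W \<in> carrier_mat n n" unfolding W_def using len by auto
  have wsi: "i < n \<Longrightarrow> ws ! i \<in> carrier_vec n" for i using wsc len nth_mem by blast
  have colW: "i < n \<Longrightarrow> col W i = nrm (ws ! i)" for i
    unfolding W_def using len wsi by (subst col_mat_of_cols) auto
  have "cadj W * W = 1\<^sub>m n"
  proof (rule eq_matI)
    fix i j assume i: "i < dim_row (1\<^sub>m n)" and j: "j < dim_col (1\<^sub>m n)"
    hence i: "i < n" and j: "j < n" by auto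
    have "(cadj W * W) $$ (i,j) = col W j \<bullet>c col W i"
      using W i j by (simp add: scalar_prod_def cadj_def row_def col_def mult.commute)
    also have "\<dots> = 1\<^sub>m n $$ (i,j)"
    proof (cases "i = j")
      case True
      have "ws ! i \<bullet>c ws ! i \<noteq> 0" using orth i len unfolding corthogonal_def by auto
      thus ?thesis using True nrm_cscalar[OF wsi[OF i]] colW i by simp
    next
      case False
      have "ws ! j \<bullet>c ws ! i = 0" using orth i j len False unfolding corthogonal_def by auto
      thus ?thesis using False nrm_orth[OF wsi[OF j] wsi[OF i]] colW i j by simp
    qed
    finally show "(cadj W * W) $$ (i,j) = 1\<^sub>m n $$ (i,j)" .
  next
    show "dim_row (cadj W * W) = dim_row (1\<^sub>m n)" using W by simp
  next
    show "dim_col (cadj W * W) = dim_col (1\<^sub>m n)" using W by simp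
  qed
  moreover hence "W * cadj W = 1\<^sub>m n" using mat_mult_left_right_inverse[OF cadj_carrier[OF W] W] by simp
  moreover have "col W 0 = u"
  proof -
    have "ws \<noteq> []" using len n0 by auto
    hence "ws ! 0 = u" using hdws by (simp add: hd_conv_nth)
    thus ?thesis using colW[OF n0] nrm_id[OF u u1] by simp
  qed
  ultimately have "unitary n W" using W unfolding unitary_def by simp
  thus ?thesis using \<open>col W 0 = u\<close> by blast
qed

definition ext0 :: "nat \<Rightarrow> complex \<Rightarrow> complex mat \<Rightarrow> complex mat" where
  "ext0 k a Y = mat (Suc k) (Suc k) (\<lambda>(i,j). if i = 0 \<and> j = 0 then a else if i = 0 \<or> j = 0 then 0 else Y $$ (i - 1, j - 1))"

lemma ext0_carrier[simp]: "ext0 k a Y \<in> carrier_mat (Suc k) (Suc k)"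
  by (simp add: ext0_def)

lemma ext0_dims[simp]: "dim_row (ext0 k a Y) = Suc k" "dim_col (ext0 k a Y) = Suc k"
  by (simp_all add: ext0_def)

lemma ext0_index: "i < Suc k \<Longrightarrow> j < Suc k \<Longrightarrow> ext0 k a Y $$ (i,j) =
   (if i = 0 \<and> j = 0 then a else if i = 0 \<or> j = 0 then 0 else Y $$ (i - 1, j - 1))"
  by (simp add: ext0_def)

lemma ext0_mult: assumes Y: "Y \<in> carrier_mat k k" and Z: "Z \<in> carrier_mat k k"
  shows "ext0 k a Y * ext0 k b Z = ext0 k (a * b) (Y * Z)"
proof (rule eq_matI)
  fix i j assume i: "i < dim_row (ext0 k (a * b) (Y * Z))" and j: "j < dim_col (ext0 k (a * b) (Y * Z))"
  hence i: "i < Suc k" and j: "j < Suc k" by auto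
  have "(ext0 k a Y * ext0 k b Z) $$ (i,j) = (\<Sum>l<Suc k. ext0 k a Y $$ (i,l) * ext0 k b Z $$ (l,j))"
    using i j by (simp add: scalar_prod_def atLeast0LessThan)
  also have "\<dots> = ext0 k a Y $$ (i,0) * ext0 k b Z $$ (0,j) + (\<Sum>l<k. ext0 k a Y $$ (i,Suc l) * ext0 k b Z $$ (Suc l,j))"
    by (rule sum.lessThan_Suc_shift)
  also have "\<dots> = ext0 k (a * b) (Y * Z) $$ (i,j)"
  proof (cases i)
    case 0
    then show ?thesis using i j by (simp add: ext0_index)
  next
    case (Suc i')
    note si = this
    show ?thesis
    proof (cases j)
      case 0
      then show ?thesis using i j si by (simp add: ext0_index)
    next
      case (Suc j')
      have "(Y * Z) $$ (i', j') = (\<Sum>l<k. Y $$ (i',l) * Z $$ (l,j'))"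
        using Y Z si Suc i j by (simp add: scalar_prod_def atLeast0LessThan)
      then show ?thesis using i j si Suc by (simp add: ext0_index)
    qed
  qed
  finally show "(ext0 k a Y * ext0 k b Z) $$ (i,j) = ext0 k (a * b) (Y * Z) $$ (i,j)" .
qed auto

lemma cadj_ext0: assumes "Y \<in> carrier_mat k k" shows "cadj (ext0 k a Y) = ext0 k (cnj a) (cadj Y)"
  by (rule eq_matI) (use assms in \<open>auto simp: ext0_index\<close>)

lemma ext0_one: "ext0 k 1 (1\<^sub>m k) = 1\<^sub>m (Suc k)"
  by (rule eq_matI) (auto simp: ext0_index)

lemma unitary_ext0: assumes "unitary k U" shows "unitary (Suc k) (ext0 k 1 U)"
proof -
  have U: "U \<in> carrier_mat k k" using assms unfolding unitary_def by auto
  show ?thesis using assms U unfolding unitary_def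
    by (simp add: cadj_ext0 ext0_mult ext0_one)
qed

lemma mat_diag_ext0: "mat_diag (Suc k) f = ext0 k (f 0) (mat_diag k (\<lambda>i. f (Suc i)))"
  by (rule eq_matI) (auto simp: ext0_index mat_diag_def)

abbreviation rdiag :: "nat \<Rightarrow> (nat \<Rightarrow> real) \<Rightarrow> complex mat" where
  "rdiag n lam \<equiv> mat_diag n (\<lambda>i. complex_of_real (lam i))"

lemma assoc3: assumes "A \<in> carrier_mat n n" "B \<in> carrier_mat n n" "C \<in> carrier_mat n n"
  shows "A * B * C = A * (B * C)"
  using assoc_mult_mat[OF assms] .

lemma mult_carrier_sq[simp]: "A \<in> carrier_mat n n \<Longrightarrow> B \<in> carrier_mat n n \<Longrightarrow> A * B \<in> carrier_mat n n"
  by auto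

lemma spectral: assumes "A \<in> carrier_mat n n" "cadj A = A"
  shows "\<exists>U lam. unitary n U \<and> A = U * rdiag n lam * cadj U"
  using assms
proof (induction n arbitrary: A)
  case 0
  have "A = 1\<^sub>m 0 * rdiag 0 (\<lambda>_. 0) * cadj (1\<^sub>m 0)"
    by (rule eq_matI) (use 0 in auto)
  moreover have "unitary 0 (1\<^sub>m 0)" unfolding unitary_def by auto
  ultimately show ?case by (intro exI[of _ "1\<^sub>m 0"] exI[of _ "\<lambda>_. 0"] conjI)
next
  case (Suc k)
  have A: "A \<in> carrier_mat (Suc k) (Suc k)" by fact
  have hA: "cadj A = A" by fact
  obtain as where cp: "char_poly A = (\<Prod>a\<leftarrow>as. [:- a, 1:])" and las: "length as = Suc k"
    using char_poly_factorized[OF A] by auto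
  then obtain e as' where as: "as = e # as'" by (cases as) auto
  have "poly (char_poly A) e = 0" unfolding cp as by simp
  hence ev: "eigenvalue A e" using eigenvalue_root_char_poly[OF A] by simp
  define v where "v = find_eigenvector A e"
  have "eigenvector A v e" unfolding v_def using find_eigenvector[OF A ev] .
  hence v: "v \<in> carrier_vec (Suc k)" and v0: "v \<noteq> 0\<^sub>v (Suc k)" and Av: "A *\<^sub>v v = e \<cdot>\<^sub>v v"
    using A unfolding eigenvector_def by auto
  have vv: "v \<bullet>c v \<noteq> 0" using v v0 by simp
  define u where "u = nrm v"
  have u: "u \<in> carrier_vec (Suc k)" unfolding u_def using v by simp
  have u1: "u \<bullet>c u = 1" unfolding u_def using nrm_cscalar[OF v vv] .
  have Au: "A *\<^sub>v u = e \<cdot>\<^sub>v u"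
    unfolding u_def nrm_def using A v Av
    by (simp add: mult_mat_vec smult_smult_assoc mult.commute)
  obtain W where W: "unitary (Suc k) W" and cW: "col W 0 = u"
    using unitary_completion[OF u u1] by auto
  have Wc: "W \<in> carrier_mat (Suc k) (Suc k)" using W unfolding unitary_def by auto
  define B where "B = cadj W * A * W"
  have Bc: "B \<in> carrier_mat (Suc k) (Suc k)" unfolding B_def using Wc A by auto
  have hB: "cadj B = B" unfolding B_def using Wc A hA
    by (simp add: cadj_mult[of _ "Suc k" "Suc k" _ "Suc k"] assoc3[of _ "Suc k"])
  have "col B 0 = (cadj W * A) *\<^sub>v col W 0"
    unfolding B_def using Wc A by (subst col_mult2[of _ "Suc k" "Suc k"]) auto
  also have "\<dots> = cadj W *\<^sub>v (e \<cdot>\<^sub>v u)" unfolding cW using Wc A u Au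
    by (subst assoc_mult_mat_vec[of _ "Suc k" "Suc k"]) auto
  also have "\<dots> = e \<cdot>\<^sub>v (cadj W *\<^sub>v col W 0)" unfolding cW
    using mult_mat_vec[OF cadj_carrier[OF Wc] u] by simp
  also have "cadj W *\<^sub>v col W 0 = col (cadj W * W) 0"
    using Wc by (subst col_mult2[of _ "Suc k" "Suc k"]) auto
  also have "cadj W * W = 1\<^sub>m (Suc k)" using W unfolding unitary_def by simp
  finally have colB: "col B 0 = e \<cdot>\<^sub>v unit_vec (Suc k) 0" by simp
  have Bi0: "i < Suc k \<Longrightarrow> B $$ (i,0) = (if i = 0 then e else 0)" for i
    using arg_cong[OF colB, of "\<lambda>x. x $ i"] Bc by (auto simp: unit_vec_def)
  have B0j: "j < Suc k \<Longrightarrow> B $$ (0,j) = (if j = 0 then cnj e else 0)" for j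
  proof -
    assume j: "j < Suc k"
    have "B $$ (0,j) = cadj B $$ (0,j)" using hB by simp
    also have "\<dots> = cnj (B $$ (j,0))" using Bc j by simp
    finally show ?thesis using Bi0[OF j] by simp
  qed
  have ereal: "e = complex_of_real (Re e)"
  proof -
    have ee: "e = cnj e" using Bi0[of 0] B0j[of 0] by simp
    have "Im e = 0" using arg_cong[OF ee, of Im] by simp
    thus ?thesis by (simp add: complex_eq_iff)
  qed
  define B3 where "B3 = mat k k (\<lambda>(i,j). B $$ (Suc i, Suc j))"
  have B3c: "B3 \<in> carrier_mat k k" unfolding B3_def by simp
  have hB3: "cadj B3 = B3"
  proof (rule eq_matI)
    fix i j assume "i < dim_row B3" "j < dim_col B3"
    hence i: "i < k" and j: "j < k" unfolding B3_def by auto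
    have "cnj (B $$ (Suc j, Suc i)) = cadj B $$ (Suc i, Suc j)" using Bc i j by simp
    also have "\<dots> = B $$ (Suc i, Suc j)" using hB by simp
    finally show "cadj B3 $$ (i,j) = B3 $$ (i,j)" unfolding B3_def using i j by simp
  qed (auto simp: B3_def)
  have Bext: "B = ext0 k e B3"
  proof (rule eq_matI)
    fix i j assume "i < dim_row (ext0 k e B3)" "j < dim_col (ext0 k e B3)"
    hence i: "i < Suc k" and j: "j < Suc k" by auto
    show "B $$ (i,j) = ext0 k e B3 $$ (i,j)"
      using Bi0[OF i] B0j[OF j] i j Bi0[of 0] ereal
      by (cases i; cases j) (auto simp: ext0_index B3_def)
  qed (use Bc in auto)
  obtain U3 lam3 where U3: "unitary k U3" and B3eq: "B3 = U3 * rdiag k lam3 * cadj U3"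
    using Suc.IH[OF B3c hB3] by auto
  have U3c: "U3 \<in> carrier_mat k k" using U3 unfolding unitary_def by auto
  define lam where "lam i = (if i = 0 then Re e else lam3 (i - 1))" for i
  define E where "E = ext0 k 1 U3"
  have E: "unitary (Suc k) E" unfolding E_def using unitary_ext0[OF U3] .
  have Ec: "E \<in> carrier_mat (Suc k) (Suc k)" unfolding E_def by simp
  have Dext: "rdiag (Suc k) lam = ext0 k e (rdiag k lam3)"
    unfolding mat_diag_ext0 lam_def using ereal by simp
  have "E * rdiag (Suc k) lam * cadj E = ext0 k e (U3 * rdiag k lam3 * cadj U3)"
    unfolding E_def Dext using U3c by (simp add: cadj_ext0 ext0_mult)
  also have "\<dots> = B" unfolding Bext B3eq ..
  finally have BE: "B = E * rdiag (Suc k) lam * cadj E" by simp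
  define U where "U = W * E"
  have U: "unitary (Suc k) U" unfolding U_def using unitary_mult[OF W E] .
  have "A = W * B * cadj W"
  proof -
    have "W * B * cadj W = W * cadj W * A * (W * cadj W)"
      unfolding B_def using Wc A by (simp add: assoc3[of _ "Suc k"] del: mult_carrier_mat)
    also have "\<dots> = A" using W A unfolding unitary_def by simp
    finally show ?thesis by simp
  qed
  also have "\<dots> = W * (E * rdiag (Suc k) lam * cadj E) * cadj W" unfolding BE ..
  also have "\<dots> = U * rdiag (Suc k) lam * cadj U"
    unfolding U_def using Wc Ec
    by (simp add: cadj_mult[of _ "Suc k" "Suc k" _ "Suc k"] assoc3[of _ "Suc k"])
  finally show ?case using U by blast
qed

lemma unitaryD: assumes "unitary n U"
  shows "U \<in> carrier_mat n n" "U * cadj U = 1\<^sub>m n" "cadj U * U = 1\<^sub>m n"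
  using assms unfolding unitary_def by auto

lemma unitary_cancel1: assumes "unitary n U" "X \<in> carrier_mat n m"
  shows "cadj U * (U * X) = X"
proof -
  have "cadj U * (U * X) = cadj U * U * X" using assms unitaryD[OF assms(1)]
    by (subst assoc_mult_mat[of _ n n _ n _ m]) auto
  thus ?thesis using unitaryD[OF assms(1)] assms by simp
qed

lemma unitary_cancel2: assumes "unitary n U" "X \<in> carrier_mat n m"
  shows "U * (cadj U * X) = X"
proof -
  have "U * (cadj U * X) = U * cadj U * X" using assms unitaryD[OF assms(1)]
    by (subst assoc_mult_mat[of _ n n _ n _ m]) auto
  thus ?thesis using unitaryD[OF assms(1)] assms by simp
qed

lemma right_one_sq[simp]: "(X :: complex mat) \<in> carrier_mat n n \<Longrightarrow> X * 1\<^sub>m n = X" by (rule right_mult_one_mat)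
lemma left_one_sq[simp]: "(X :: complex mat) \<in> carrier_mat n n \<Longrightarrow> 1\<^sub>m n * X = X" by (rule left_mult_one_mat)
lemma mat_diag_dims[simp]: "dim_row (mat_diag n f) = n" "dim_col (mat_diag n f) = n"
  by (simp_all add: mat_diag_def)
lemma cnj_mult_self: "cnj z * z = complex_of_real ((cmod z)\<^sup>2)"
  using complex_norm_square[of z] by (simp add: mult.commute)
lemma cnj_mult_self2: "z * cnj z = (complex_of_real (cmod z))\<^sup>2"
  using complex_norm_square[of z] by simp
lemma rdiag_one[simp]: "rdiag n g * 1\<^sub>m n = rdiag n g" "1\<^sub>m n * rdiag n g = rdiag n g"
  by (rule right_one_sq, simp) (rule left_one_sq, simp)

lemma unitary_cancel1_sq: "unitary n U \<Longrightarrow> X \<in> carrier_mat n n \<Longrightarrow> cadj U * (U * X) = X"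
  by (rule unitary_cancel1)

lemma unitary_cancel2_sq: "unitary n U \<Longrightarrow> X \<in> carrier_mat n n \<Longrightarrow> U * (cadj U * X) = X"
  by (rule unitary_cancel2)

lemma cadj_rdiag[simp]: "cadj (rdiag n l) = rdiag n l"
  by (rule eq_matI) (auto simp: mat_diag_def)

lemma unitary_cadj: "unitary n U \<Longrightarrow> unitary n (cadj U)"
  unfolding unitary_def by auto

lemma fun_unique:
  assumes U: "unitary n U" and V: "unitary n V"
    and eq: "U * rdiag n l * cadj U = V * rdiag n m * cadj V"
  shows "U * rdiag n (\<lambda>i. f (l i)) * cadj U = V * rdiag n (\<lambda>i. f (m i)) * cadj V"
proof -
  note Uc = unitaryD(1)[OF U] and Vc = unitaryD(1)[OF V]
  define W where "W = cadj V * U"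
  have Wc: "W \<in> carrier_mat n n" unfolding W_def using Uc Vc by simp
  have "cadj V * (U * rdiag n l * cadj U) * U = cadj V * (V * rdiag n m * cadj V) * U"
    unfolding eq ..
  also have "cadj V * (V * rdiag n m * cadj V) * U = rdiag n m * W"
    unfolding W_def using Uc Vc
    by (simp add: assoc3[of _ n] unitary_cancel1_sq[OF V] del: mult_carrier_mat)
  also have "cadj V * (U * rdiag n l * cadj U) * U = W * rdiag n l"
    unfolding W_def using Uc Vc unitaryD[OF U]
    by (simp add: assoc3[of _ n] del: mult_carrier_mat)
  finally have WD: "W * rdiag n l = rdiag n m * W" .
  have ent: "W $$ (i,j) * complex_of_real (l j) = complex_of_real (m i) * W $$ (i,j)" if "i < n" "j < n" for i j
  proof -
    have "(W * rdiag n l) $$ (i,j) = (rdiag n m * W) $$ (i,j)" using WD by simp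
    thus ?thesis using that Wc by (simp add: mat_diag_mult_left[OF Wc] mat_diag_mult_right[OF Wc])
  qed
  have WF: "W * rdiag n (\<lambda>i. f (l i)) = rdiag n (\<lambda>i. f (m i)) * W"
  proof (rule eq_matI)
    fix i j assume "i < dim_row (rdiag n (\<lambda>i. f (m i)) * W)" "j < dim_col (rdiag n (\<lambda>i. f (m i)) * W)"
    hence i: "i < n" and j: "j < n" using Wc by auto
    have "W $$ (i,j) * complex_of_real (f (l j)) = complex_of_real (f (m i)) * W $$ (i,j)"
    proof (cases "W $$ (i,j) = 0")
      case False
      with ent[OF i j] have "l j = m i" by (simp add: mult.commute)
      thus ?thesis by (simp add: mult.commute)
    qed simp
    thus "(W * rdiag n (\<lambda>i. f (l i))) $$ (i,j) = (rdiag n (\<lambda>i. f (m i)) * W) $$ (i,j)"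
      using i j Wc by (simp add: mat_diag_mult_left[OF Wc] mat_diag_mult_right[OF Wc])
  qed (use Wc in auto)
  have "U * rdiag n (\<lambda>i. f (l i)) * cadj U = V * (W * rdiag n (\<lambda>i. f (l i))) * cadj U"
    unfolding W_def using Uc Vc
    by (simp add: assoc3[of _ n] unitary_cancel2_sq[OF V] del: mult_carrier_mat)
  also have "\<dots> = V * rdiag n (\<lambda>i. f (m i)) * (W * cadj U)" unfolding WF using Uc Vc Wc
    by (simp add: assoc3[of _ n] del: mult_carrier_mat)
  also have "W * cadj U = cadj V" unfolding W_def using Uc Vc unitaryD[OF U]
    by (simp add: assoc3[of _ n] del: mult_carrier_mat)
  finally show ?thesis .
qed

lemma mat_fun_eq: assumes U: "unitary n U" and A: "A = U * rdiag n l * cadj U"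
  shows "mat_fun n f A = U * rdiag n (\<lambda>i. f (l i)) * cadj U"
  unfolding mat_fun_def
proof (rule the_equality)
  show "\<exists>U' lam. unitary n U' \<and> A = U' * rdiag n lam * cadj U' \<and>
      U * rdiag n (\<lambda>i. f (l i)) * cadj U = U' * rdiag n (\<lambda>i. f (lam i)) * cadj U'"
    using U A by blast
next
  fix X assume "\<exists>U' lam. unitary n U' \<and> A = U' * rdiag n lam * cadj U' \<and> X = U' * rdiag n (\<lambda>i. f (lam i)) * cadj U'"
  then obtain U' lam where U': "unitary n U'" and A': "A = U' * rdiag n lam * cadj U'"
    and X: "X = U' * rdiag n (\<lambda>i. f (lam i)) * cadj U'" by blast
  show "X = U * rdiag n (\<lambda>i. f (l i)) * cadj U"
    unfolding X using fun_unique[OF U' U, of lam l f] A A' by simp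
qed

lemma mat_powr_eq: "unitary n U \<Longrightarrow> A = U * rdiag n l * cadj U \<Longrightarrow>
   mat_powr n A p = U * rdiag n (\<lambda>i. l i powr p) * cadj U"
  unfolding mat_powr_def by (rule mat_fun_eq)

lemma hermitian_decomp: "unitary n U \<Longrightarrow> hermitian n (U * rdiag n l * cadj U)"
  unfolding hermitian_def using unitaryD[of n U]
  by (auto simp: cadj_mult[of _ n n _ n] assoc3[of _ n] cadj_carrier)

lemma mtrace_comm: assumes "A \<in> carrier_mat n m" "B \<in> carrier_mat m n"
  shows "mtrace (A * B) = mtrace (B * A)"
proof -
  have "mtrace (A * B) = (\<Sum>i<n. \<Sum>j<m. A $$ (i,j) * B $$ (j,i))"
    unfolding mtrace_def using assms by (simp add: scalar_prod_def atLeast0LessThan)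
  also have "\<dots> = (\<Sum>j<m. \<Sum>i<n. B $$ (j,i) * A $$ (i,j))"
    by (subst sum.swap) (simp add: mult.commute)
  also have "\<dots> = mtrace (B * A)"
    unfolding mtrace_def using assms by (simp add: scalar_prod_def atLeast0LessThan)
  finally show ?thesis .
qed

lemma mtrace_add: "A \<in> carrier_mat n n \<Longrightarrow> B \<in> carrier_mat n n \<Longrightarrow> mtrace (A + B) = mtrace A + mtrace B"
  unfolding mtrace_def by (simp add: sum.distrib)

lemma mtrace_conj: assumes U: "unitary n U" and X: "X \<in> carrier_mat n n"
  shows "mtrace (cadj U * X * U) = mtrace X"
proof -
  have "mtrace (cadj U * X * U) = mtrace (U * (cadj U * X))"
    using mtrace_comm[of "cadj U * X" n n U] unitaryD[OF U] X by simp
  also have "\<dots> = mtrace X" using unitary_cancel2[OF U X] by simp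
  finally show ?thesis .
qed

lemma mtrace_decomp: assumes U: "unitary n U"
  shows "mtrace (U * rdiag n g * cadj U) = complex_of_real (\<Sum>i<n. g i)"
proof -
  have "mtrace (U * rdiag n g * cadj U) = mtrace (cadj U * (U * rdiag n g * cadj U) * U)"
    using mtrace_conj[OF U, of "U * rdiag n g * cadj U"] unitaryD[OF U] by simp
  also have "cadj U * (U * rdiag n g * cadj U) * U = rdiag n g"
    using unitaryD[OF U] by (simp add: assoc3[of _ n] unitary_cancel1_sq[OF U] del: mult_carrier_mat)
  also have "mtrace (rdiag n g) = complex_of_real (\<Sum>i<n. g i)"
    unfolding mtrace_def by (simp add: mat_diag_def)
  finally show ?thesis .
qed

lemma diag_entry: assumes U: "unitary n U" and V: "unitary n V" and k: "k < n"
  shows "(cadj U * (V * rdiag n g * cadj V) * U) $$ (k,k) =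
     complex_of_real (\<Sum>j<n. (cmod ((cadj V * U) $$ (j,k)))\<^sup>2 * g j)"
proof -
  note Uc = unitaryD(1)[OF U] and Vc = unitaryD(1)[OF V]
  define W where "W = cadj V * U"
  have Wc: "W \<in> carrier_mat n n" unfolding W_def using Uc Vc by simp
  have cW: "cadj W = cadj U * V" unfolding W_def using Uc Vc by (simp add: cadj_mult[of _ n n _ n])
  have "cadj U * (V * rdiag n g * cadj V) * U = cadj W * rdiag n g * W"
    unfolding W_def using Uc Vc by (simp add: assoc3[of _ n] cadj_mult[of _ n n _ n] del: mult_carrier_mat)
  also have "\<dots> = mat n n (\<lambda>(i,j). cadj W $$ (i,j) * complex_of_real (g j)) * W"
    using mat_diag_mult_right[OF cadj_carrier[OF Wc]] by simp
  finally have e: "cadj U * (V * rdiag n g * cadj V) * U = mat n n (\<lambda>(i,j). cadj W $$ (i,j) * complex_of_real (g j)) * W" .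
  have "(cadj U * (V * rdiag n g * cadj V) * U) $$ (k,k) = (\<Sum>j<n. cnj (W $$ (j,k)) * complex_of_real (g j) * W $$ (j,k))"
    unfolding e using Wc k by (simp add: scalar_prod_def atLeast0LessThan)
  also have "\<dots> = (\<Sum>j<n. complex_of_real ((cmod (W $$ (j,k)))\<^sup>2 * g j))"
    by (intro sum.cong refl) (simp add: cnj_mult_self2 mult.commute mult.left_commute)
  also have "\<dots> = complex_of_real (\<Sum>j<n. (cmod (W $$ (j,k)))\<^sup>2 * g j)" by simp
  finally show ?thesis unfolding W_def .
qed

lemma weights_sum: assumes W: "unitary n W" and k: "k < n"
  shows "(\<Sum>j<n. (cmod (W $$ (j,k)))\<^sup>2) = 1"
proof -
  note Wc = unitaryD(1)[OF W]
  have "complex_of_real (\<Sum>j<n. (cmod (W $$ (j,k)))\<^sup>2) = (\<Sum>j<n. complex_of_real ((cmod (W $$ (j,k)))\<^sup>2))"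
    by simp
  also have "\<dots> = (\<Sum>j<n. cnj (W $$ (j,k)) * W $$ (j,k))"
    by (intro sum.cong refl) (simp only: cnj_mult_self)
  also have "\<dots> = (cadj W * W) $$ (k,k)"
    using Wc k by (simp add: scalar_prod_def atLeast0LessThan)
  also have "\<dots> = 1" using unitaryD(3)[OF W] k by simp
  finally show ?thesis by (metis of_real_eq_1_iff)
qed

lemma qform_col: assumes X: "X \<in> carrier_mat n n" and V: "V \<in> carrier_mat n n" and j: "j < n"
  shows "qform X (col V j) = (cadj V * X * V) $$ (j,j)"
proof -
  have "(cadj V * X * V) $$ (j,j) = (cadj V * (X * V)) $$ (j,j)"
    using X V by (simp add: assoc3[of _ n] del: mult_carrier_mat)
  also have "\<dots> = row (cadj V) j \<bullet> col (X * V) j"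
    using X V j by (subst index_mult_mat) auto
  also have "col (X * V) j = X *\<^sub>v col V j"
    using X V j by (rule col_mult2)
  also have "row (cadj V) j = conjugate (col V j)"
    using V j by (intro eq_vecI) auto
  finally show ?thesis unfolding qform_def by simp
qed

lemma qform_decomp: assumes V: "unitary n V" and j: "j < n"
  shows "qform (V * rdiag n l * cadj V) (col V j) = complex_of_real (l j)"
proof -
  note Vc = unitaryD(1)[OF V]
  have "qform (V * rdiag n l * cadj V) (col V j) = (cadj V * (V * rdiag n l * cadj V) * V) $$ (j,j)"
    by (rule qform_col) (use Vc j in auto)
  also have "cadj V * (V * rdiag n l * cadj V) * V = rdiag n l"
    using unitaryD[OF V] by (simp add: assoc3[of _ n] unitary_cancel1_sq[OF V] del: mult_carrier_mat)
  finally show ?thesis using j by (simp add: mat_diag_def)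
qed

lemma col_norm: assumes V: "unitary n V" and j: "j < n"
  shows "conjugate (col V j) \<bullet> col V j = 1"
proof -
  have "qform (1\<^sub>m n) (col V j) = (cadj V * 1\<^sub>m n * V) $$ (j,j)"
    by (rule qform_col) (use unitaryD[OF V] j in auto)
  also have "\<dots> = 1" using unitaryD[OF V] j by simp
  finally show ?thesis unfolding qform_def using unitaryD[OF V] j by simp
qed

lemma qform_add: assumes "X \<in> carrier_mat n n" "Y \<in> carrier_mat n n" "v \<in> carrier_vec n"
  shows "qform (X + Y) v = qform X v + qform Y v"
  unfolding qform_def using assms
  by (simp add: add_mult_distrib_mat_vec[of _ n n] scalar_prod_add_distrib[of _ n])

lemma qform_minus: assumes "X \<in> carrier_mat n n" "Y \<in> carrier_mat n n" "v \<in> carrier_vec n"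
  shows "qform (X - Y) v = qform X v - qform Y v"
  unfolding qform_def using assms
  by (simp add: minus_mult_distrib_mat_vec[of _ n n] scalar_prod_minus_distrib[of _ n])

lemma smult_one_mult_vec: fixes v :: "complex vec" assumes "v \<in> carrier_vec n" shows "(c \<cdot>\<^sub>m 1\<^sub>m n) *\<^sub>v v = c \<cdot>\<^sub>v v"
proof (rule eq_vecI)
  fix i assume "i < dim_vec (c \<cdot>\<^sub>v v)"
  hence i: "i < n" using assms by simp
  have "((c \<cdot>\<^sub>m 1\<^sub>m n) *\<^sub>v v) $ i = (\<Sum>j = 0..<n. c * (if j = i then 1 else 0) * v $ j)"
    using i assms by (simp add: scalar_prod_def)
  also have "\<dots> = (\<Sum>j = 0..<n. if j = i then c * v $ j else 0)"
    by (rule sum.cong) auto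
  also have "\<dots> = c * v $ i" using i by simp
  finally show "((c \<cdot>\<^sub>m 1\<^sub>m n) *\<^sub>v v) $ i = (c \<cdot>\<^sub>v v) $ i" using i assms by simp
qed (use assms in auto)

lemma qform_smult_one: fixes v :: "complex vec" assumes "v \<in> carrier_vec n"
  shows "qform (c \<cdot>\<^sub>m 1\<^sub>m n) v = c * (conjugate v \<bullet> v)"
  unfolding qform_def smult_one_mult_vec[OF assms] using assms by simp

lemma deriv_cmp:
  fixes p x :: real assumes x: "x > 0"
  shows "(p \<ge> 1 \<or> p \<le> 0) \<Longrightarrow> x \<ge> 1 \<Longrightarrow> p * x powr (p - 1) \<ge> p"
    and "(p \<ge> 1 \<or> p \<le> 0) \<Longrightarrow> x \<le> 1 \<Longrightarrow> p * x powr (p - 1) \<le> p"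
    and "0 \<le> p \<Longrightarrow> p \<le> 1 \<Longrightarrow> x \<ge> 1 \<Longrightarrow> p * x powr (p - 1) \<le> p"
    and "0 \<le> p \<Longrightarrow> p \<le> 1 \<Longrightarrow> x \<le> 1 \<Longrightarrow> p * x powr (p - 1) \<ge> p"
proof -
  have ge1: "x powr (p - 1) \<ge> 1" if "x \<ge> 1" "p \<ge> 1"
    using ge_one_powr_ge_zero[of x "p - 1"] that by simp
  have le1: "x powr (p - 1) \<le> 1" if "x \<ge> 1" "p \<le> 1"
    using powr_mono[of "p - 1" 0 x] that by simp
  have le1': "x powr (p - 1) \<le> 1" if "x \<le> 1" "p \<ge> 1"
    using powr_mono'[of 0 "p - 1" x] that x by simp
  have ge1': "x powr (p - 1) \<ge> 1" if "x \<le> 1" "p \<le> 1"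
    using powr_mono'[of "p - 1" 0 x] that x by simp
  show "(p \<ge> 1 \<or> p \<le> 0) \<Longrightarrow> x \<ge> 1 \<Longrightarrow> p * x powr (p - 1) \<ge> p"
  proof -
    assume "p \<ge> 1 \<or> p \<le> 0" "x \<ge> 1"
    thus ?thesis using ge1 le1 mult_left_mono[of 1 "x powr (p - 1)" p] mult_left_mono_neg[of "x powr (p - 1)" 1 p]
      by auto
  qed
  show "(p \<ge> 1 \<or> p \<le> 0) \<Longrightarrow> x \<le> 1 \<Longrightarrow> p * x powr (p - 1) \<le> p"
  proof -
    assume "p \<ge> 1 \<or> p \<le> 0" "x \<le> 1"
    thus ?thesis using ge1' le1' mult_left_mono[of "x powr (p - 1)" 1 p] mult_left_mono_neg[of 1 "x powr (p - 1)" p]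
      by auto
  qed
  show "0 \<le> p \<Longrightarrow> p \<le> 1 \<Longrightarrow> x \<ge> 1 \<Longrightarrow> p * x powr (p - 1) \<le> p"
    using le1 mult_left_mono[of "x powr (p - 1)" 1 p] by auto
  show "0 \<le> p \<Longrightarrow> p \<le> 1 \<Longrightarrow> x \<le> 1 \<Longrightarrow> p * x powr (p - 1) \<ge> p"
    using ge1' mult_left_mono[of 1 "x powr (p - 1)" p] by auto
qed

lemma mvt_powr:
  fixes a b p :: real assumes "0 < a" "a < b"
  shows "\<exists>\<xi>. a < \<xi> \<and> \<xi> < b \<and> b powr p - a powr p = (b - a) * (p * \<xi> powr (p - 1))"
proof -
  have "((\<lambda>x. x powr p) has_real_derivative p * x powr (p - 1)) (at x)" if "a \<le> x" "x \<le> b" for x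
    using assms that by (intro has_real_derivative_powr) auto
  from MVT2[OF assms(2) this] show ?thesis by auto
qed

lemma tangent_convex:
  fixes z p :: real assumes z: "z > 0" and p: "p \<ge> 1 \<or> p \<le> 0"
  shows "1 + p * (z - 1) \<le> z powr p"
proof -
  consider "z = 1" | "z > 1" | "z < 1" by linarith
  thus ?thesis
  proof cases
    case 1 thus ?thesis by simp
  next
    case 2
    obtain x where x: "1 < x" "x < z" "z powr p - 1 powr p = (z - 1) * (p * x powr (p - 1))"
      using mvt_powr[of 1 z p] 2 by auto
    have "p * x powr (p - 1) \<ge> p" using deriv_cmp(1)[of x p] x p by auto
    hence "(z - 1) * (p * x powr (p - 1)) \<ge> (z - 1) * p" using 2 by (intro mult_left_mono) auto
    thus ?thesis using x by (simp add: algebra_simps)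
  next
    case 3
    obtain x where x: "z < x" "x < 1" "1 powr p - z powr p = (1 - z) * (p * x powr (p - 1))"
      using mvt_powr[of z 1 p] 3 z by auto
    have "p * x powr (p - 1) \<le> p" using deriv_cmp(2)[of x p] x p z by auto
    hence "(1 - z) * (p * x powr (p - 1)) \<le> (1 - z) * p" using 3 by (intro mult_left_mono) auto
    thus ?thesis using x by (simp add: algebra_simps)
  qed
qed

lemma tangent_concave:
  fixes z p :: real assumes z: "z > 0" and p: "0 \<le> p" "p \<le> 1"
  shows "z powr p \<le> 1 + p * (z - 1)"
proof -
  consider "z = 1" | "z > 1" | "z < 1" by linarith
  thus ?thesis
  proof cases
    case 1 thus ?thesis by simp
  next
    case 2
    obtain x where x: "1 < x" "x < z" "z powr p - 1 powr p = (z - 1) * (p * x powr (p - 1))"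
      using mvt_powr[of 1 z p] 2 by auto
    have "p * x powr (p - 1) \<le> p" using deriv_cmp(3)[of x p] x p by auto
    hence "(z - 1) * (p * x powr (p - 1)) \<le> (z - 1) * p" using 2 by (intro mult_left_mono) auto
    thus ?thesis using x by (simp add: algebra_simps)
  next
    case 3
    obtain x where x: "z < x" "x < 1" "1 powr p - z powr p = (1 - z) * (p * x powr (p - 1))"
      using mvt_powr[of z 1 p] 3 z by auto
    have "p * x powr (p - 1) \<ge> p" using deriv_cmp(4)[of x p] x p z by auto
    hence "(1 - z) * (p * x powr (p - 1)) \<ge> (1 - z) * p" using 3 by (intro mult_left_mono) auto
    thus ?thesis using x by (simp add: algebra_simps)
  qed
qed

lemma tangent_convex_at:
  fixes t y p :: real assumes "t > 0" "y > 0" "p \<ge> 1 \<or> p \<le> 0"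
  shows "y powr p * (1 - p) + (p * y powr p / y) * t \<le> t powr p"
proof -
  have "1 + p * (t / y - 1) \<le> (t / y) powr p" using tangent_convex[of "t / y" p] assms by auto
  hence "y powr p * (1 + p * (t / y - 1)) \<le> y powr p * (t / y) powr p"
    by (intro mult_left_mono) auto
  also have "y powr p * (t / y) powr p = t powr p" using assms by (simp add: powr_divide)
  finally show ?thesis using assms by (simp add: algebra_simps)
qed

lemma tangent_concave_at:
  fixes t y p :: real assumes "t > 0" "y > 0" "0 \<le> p" "p \<le> 1"
  shows "t powr p \<le> y powr p * (1 - p) + (p * y powr p / y) * t"
proof -
  have "(t / y) powr p \<le> 1 + p * (t / y - 1)" using tangent_concave[of "t / y" p] assms by auto
  hence "y powr p * (t / y) powr p \<le> y powr p * (1 + p * (t / y - 1))"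
    by (intro mult_left_mono) auto
  also have "y powr p * (t / y) powr p = t powr p" using assms by (simp add: powr_divide)
  finally show ?thesis using assms by (simp add: algebra_simps)
qed

lemma alg1: fixes a u v :: real shows "u \<noteq> 0 \<Longrightarrow> v \<noteq> 0 \<Longrightarrow> a / (u * v) * (- u) = - a / v"
  by (simp add: field_simps)

lemma alg2: fixes a b u v p :: real shows "u \<noteq> 0 \<Longrightarrow> v \<noteq> 0 \<Longrightarrow> p \<noteq> 0 \<Longrightarrow> a \<noteq> 0 \<Longrightarrow>
   a / (u * v) * p * ((u / p) * (b / a)) = b / v"
  by (simp add: field_simps)

lemma kant_facts:
  fixes h p :: real assumes h: "h > 1" and p0: "p \<noteq> 0" and p1: "p \<noteq> 1"
  defines "C \<equiv> (h powr p - h) / ((p - 1) * (h - 1))"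
  defines "r \<equiv> ((p - 1) / p) * ((h powr p - 1) / (h powr p - h))"
  shows "C > 0" "r > 0" "C * (1 - p) = (h - h powr p) / (h - 1)"
    "C * p * r = (h powr p - 1) / (h - 1)" "Kant h p = C * r powr p"
proof -
  have h0: "h \<noteq> 0" using h by auto
  have hm1: "h - 1 \<noteq> 0" "p - 1 \<noteq> 0" "1 - p \<noteq> 0" using h p1 by auto
  have c0: "h powr 0 < h powr p \<longleftrightarrow> 0 < p" by (rule powr_less_cancel_iff[OF h])
  have c0': "h powr p < h powr 0 \<longleftrightarrow> p < 0" by (rule powr_less_cancel_iff[OF h])
  have c1: "h powr 1 < h powr p \<longleftrightarrow> 1 < p" by (rule powr_less_cancel_iff[OF h])
  have c1': "h powr p < h powr 1 \<longleftrightarrow> p < 1" by (rule powr_less_cancel_iff[OF h])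
  have hp1: "h powr p > 1 \<longleftrightarrow> p > 0" using c0 h0 by simp
  have hph: "h powr p > h \<longleftrightarrow> p > 1" using c1 h by simp
  have hph': "h powr p < h \<longleftrightarrow> p < 1" using c1' h by simp
  have hp1': "h powr p < 1 \<longleftrightarrow> p < 0" using c0' h0 by simp
  have ne: "h powr p \<noteq> h" using hph hph' p1 by auto
  consider "p > 1" | "p < 0" | "0 < p \<and> p < 1" using p0 p1 by linarith
  hence Cr: "C > 0 \<and> r > 0"
  proof cases
    case 1
    then show ?thesis unfolding C_def r_def using h hp1 hph
      by (auto intro!: divide_pos_pos mult_pos_pos)
  next
    case 2
    have a: "h powr p - h < 0" "p - 1 < 0" "h powr p - 1 < 0" using 2 hph' hp1' by auto
    have "(p - 1) * (h - 1) < 0" using a h by (simp add: mult_neg_pos)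
    hence "C > 0" unfolding C_def using a by (simp add: divide_neg_neg)
    moreover have "(p - 1) / p > 0" using a 2 by (simp add: divide_neg_neg)
    moreover have "(h powr p - 1) / (h powr p - h) > 0" using a by (simp add: divide_neg_neg)
    ultimately show ?thesis unfolding r_def by (metis mult_pos_pos)
  next
    case 3
    have a: "h powr p - h < 0" "p - 1 < 0" "h powr p - 1 > 0" using 3 hph' hp1 by auto
    have "(p - 1) * (h - 1) < 0" using a h by (simp add: mult_neg_pos)
    hence "C > 0" unfolding C_def using a by (simp add: divide_neg_neg)
    moreover have "(p - 1) / p < 0" using a 3 by (simp add: divide_neg_pos)
    moreover have "(h powr p - 1) / (h powr p - h) < 0" using a by (simp add: divide_pos_neg)
    ultimately show ?thesis unfolding r_def by (metis mult_neg_neg)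
  qed
  thus "C > 0" "r > 0" by auto
  have hm: "h - 1 \<noteq> 0" "p - 1 \<noteq> 0" "h powr p - h \<noteq> 0" using h p1 ne by auto
  show "C * (1 - p) = (h - h powr p) / (h - 1)" unfolding C_def
    using alg1[OF hm(2) hm(1), of "h powr p - h"] by simp
  show "C * p * r = (h powr p - 1) / (h - 1)" unfolding C_def r_def
    using alg2[OF hm(2) hm(1) p0 hm(3), of "h powr p - 1"] by simp
  show "Kant h p = C * r powr p" unfolding Kant_def C_def r_def using p1 by simp
qed

lemma kant_pos: fixes h p :: real assumes "h > 1" "p \<noteq> 0" shows "Kant h p > 0"
proof (cases "p = 1")
  case True thus ?thesis by (simp add: Kant_def)
next
  case False
  define C where "C = (h powr p - h) / ((p - 1) * (h - 1))"
  define r where "r = ((p - 1) / p) * ((h powr p - 1) / (h powr p - h))"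
  note f = kant_facts[OF assms(1,2) False, folded C_def r_def]
  show ?thesis using f by simp
qed

lemma kant_line_convex:
  fixes h p m :: real assumes h: "h > 1" and p: "p > 1 \<or> p < 0" and m: "m > 0"
  shows "(h - h powr p) / (h - 1) + (h powr p - 1) / (h - 1) * m \<le> Kant h p * m powr p"
proof -
  define C where "C = (h powr p - h) / ((p - 1) * (h - 1))"
  define r where "r = ((p - 1) / p) * ((h powr p - 1) / (h powr p - h))"
  have p0: "p \<noteq> 0" and p1: "p \<noteq> 1" using p by auto
  note f = kant_facts[OF h p0 p1, folded C_def r_def]
  have "1 + p * (r * m - 1) \<le> (r * m) powr p" using tangent_convex[of "r * m" p] f m p by auto
  hence "C * (1 + p * (r * m - 1)) \<le> C * (r * m) powr p" using f by (intro mult_left_mono) auto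
  also have "C * (r * m) powr p = Kant h p * m powr p" using f m by (simp add: powr_mult)
  also have "C * (1 + p * (r * m - 1)) = C * (1 - p) + C * p * r * m" by (simp add: algebra_simps)
  finally show ?thesis using f by simp
qed

lemma kant_line_concave:
  fixes h p m :: real assumes h: "h > 1" and p: "0 < p" "p < 1" and m: "m > 0"
  shows "Kant h p * m powr p \<le> (h - h powr p) / (h - 1) + (h powr p - 1) / (h - 1) * m"
proof -
  define C where "C = (h powr p - h) / ((p - 1) * (h - 1))"
  define r where "r = ((p - 1) / p) * ((h powr p - 1) / (h powr p - h))"
  have p0: "p \<noteq> 0" and p1: "p \<noteq> 1" using p by auto
  note f = kant_facts[OF h p0 p1, folded C_def r_def]
  have "(r * m) powr p \<le> 1 + p * (r * m - 1)" using tangent_concave[of "r * m" p] f m p by auto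
  hence "C * (r * m) powr p \<le> C * (1 + p * (r * m - 1))" using f by (intro mult_left_mono) auto
  also have "C * (r * m) powr p = Kant h p * m powr p" using f m by (simp add: powr_mult)
  also have "C * (1 + p * (r * m - 1)) = C * (1 - p) + C * p * r * m" by (simp add: algebra_simps)
  finally show ?thesis using f by simp
qed

lemma chord_convex:
  fixes h p t :: real assumes h: "h > 1" and p: "p \<ge> 1 \<or> p \<le> 0" and t: "1 \<le> t" "t \<le> h"
  shows "t powr p \<le> (h - h powr p) / (h - 1) + (h powr p - 1) / (h - 1) * t"
proof -
  define T where "T = t powr p"
  define q where "q = p * T / t"
  have A: "T * (1 - p) + q * 1 \<le> 1" using tangent_convex_at[of 1 t p] t p unfolding T_def q_def by auto
  have B: "T * (1 - p) + q * h \<le> h powr p" using tangent_convex_at[of h t p] t p h unfolding T_def q_def by auto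
  have A': "(h - t) * (T * (1 - p) + q * 1) \<le> (h - t) * 1" using A t by (intro mult_left_mono) auto
  have B': "(t - 1) * (T * (1 - p) + q * h) \<le> (t - 1) * h powr p" using B t by (intro mult_left_mono) auto
  have id: "(h - t) * (T * (1 - p) + q * 1) + (t - 1) * (T * (1 - p) + q * h) = (h - 1) * T"
    unfolding q_def using t by (simp add: field_simps)
  have "(h - t) * (T * (1 - p) + q * 1) + (t - 1) * (T * (1 - p) + q * h) \<le> (h - t) * 1 + (t - 1) * h powr p"
    using A' B' by (rule add_mono)
  hence "(h - 1) * T \<le> (h - t) + (t - 1) * h powr p" unfolding id by simp
  hence "T \<le> ((h - t) + (t - 1) * h powr p) / (h - 1)" using h by (simp add: field_simps)
  also have "\<dots> = (h - h powr p) / (h - 1) + (h powr p - 1) / (h - 1) * t"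
    using h by (simp add: add_divide_distrib diff_divide_distrib algebra_simps)
  finally show ?thesis unfolding T_def .
qed

lemma chord_concave:
  fixes h p t :: real assumes h: "h > 1" and p: "0 \<le> p" "p \<le> 1" and t: "1 \<le> t" "t \<le> h"
  shows "(h - h powr p) / (h - 1) + (h powr p - 1) / (h - 1) * t \<le> t powr p"
proof -
  define T where "T = t powr p"
  define q where "q = p * T / t"
  have A: "1 \<le> T * (1 - p) + q * 1" using tangent_concave_at[of 1 t p] t p unfolding T_def q_def by auto
  have B: "h powr p \<le> T * (1 - p) + q * h" using tangent_concave_at[of h t p] t p h unfolding T_def q_def by auto
  have A': "(h - t) * 1 \<le> (h - t) * (T * (1 - p) + q * 1)" using A t by (intro mult_left_mono) auto
  have B': "(t - 1) * h powr p \<le> (t - 1) * (T * (1 - p) + q * h)" using B t by (intro mult_left_mono) auto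
  have id: "(h - t) * (T * (1 - p) + q * 1) + (t - 1) * (T * (1 - p) + q * h) = (h - 1) * T"
    unfolding q_def using t by (simp add: field_simps)
  have "(h - t) * 1 + (t - 1) * h powr p \<le> (h - t) * (T * (1 - p) + q * 1) + (t - 1) * (T * (1 - p) + q * h)"
    using A' B' by (rule add_mono)
  hence "(h - t) + (t - 1) * h powr p \<le> (h - 1) * T" unfolding id by simp
  hence "((h - t) + (t - 1) * h powr p) / (h - 1) \<le> T" using h by (simp add: field_simps)
  moreover have "((h - t) + (t - 1) * h powr p) / (h - 1) = (h - h powr p) / (h - 1) + (h powr p - 1) / (h - 1) * t"
    using h by (simp add: add_divide_distrib diff_divide_distrib algebra_simps)
  ultimately show ?thesis unfolding T_def by simp
qed

lemma sum_lin: fixes w t :: "'a \<Rightarrow> real"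
  shows "(\<Sum>x\<in>I. w x * (\<alpha> + \<beta> * t x)) = \<alpha> * (\<Sum>x\<in>I. w x) + \<beta> * (\<Sum>x\<in>I. w x * t x)"
  by (simp add: sum.distrib sum_distrib_left distrib_left mult.commute mult.left_commute)

lemma weighted_norm:
  fixes w t :: "'a \<Rightarrow> real" and h p :: real
  assumes I: "finite I" and w: "\<And>x. x \<in> I \<Longrightarrow> 0 \<le> w x" and w1: "(\<Sum>x\<in>I. w x) = 1"
    and t: "\<And>x. x \<in> I \<Longrightarrow> 1 \<le> t x \<and> t x \<le> h" and h: "h > 1"
  defines "\<mu> \<equiv> (\<Sum>x\<in>I. w x * t x)" and "\<nu> \<equiv> (\<Sum>x\<in>I. w x * t x powr p)"
  shows "(p \<ge> 1 \<or> p < 0) \<Longrightarrow> \<mu> powr p \<le> \<nu> \<and> \<nu> \<le> Kant h p * \<mu> powr p"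
    and "(0 < p \<and> p \<le> 1) \<Longrightarrow> Kant h p * \<mu> powr p \<le> \<nu> \<and> \<nu> \<le> \<mu> powr p"
proof -
  have "(\<Sum>x\<in>I. w x * 1) \<le> \<mu>" unfolding \<mu>_def using w t by (intro sum_mono mult_left_mono) auto
  hence mu1: "1 \<le> \<mu>" using w1 by simp
  have "\<mu> \<le> (\<Sum>x\<in>I. w x * h)" unfolding \<mu>_def using w t by (intro sum_mono mult_left_mono) auto
  hence muh: "\<mu> \<le> h" using w1 by (simp add: sum_distrib_right[symmetric])
  have tpos: "x \<in> I \<Longrightarrow> t x > 0" for x using t[of x] by auto
  have p1: "\<nu> = \<mu>" "Kant h 1 = 1" if "p = 1"
    unfolding \<nu>_def \<mu>_def using that tpos by (auto intro!: sum.cong simp: Kant_def less_imp_le)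
  define \<alpha>2 where "\<alpha>2 = (h - h powr p) / (h - 1)"
  define \<beta>2 where "\<beta>2 = (h powr p - 1) / (h - 1)"
  define \<alpha>1 where "\<alpha>1 = \<mu> powr p * (1 - p)"
  define \<beta>1 where "\<beta>1 = p * \<mu> powr p / \<mu>"
  have ab1: "\<alpha>1 + \<beta>1 * \<mu> = \<mu> powr p" unfolding \<alpha>1_def \<beta>1_def using mu1 by (simp add: algebra_simps)
  show "(p \<ge> 1 \<or> p < 0) \<Longrightarrow> \<mu> powr p \<le> \<nu> \<and> \<nu> \<le> Kant h p * \<mu> powr p"
  proof -
    assume p: "p \<ge> 1 \<or> p < 0"
    have "(\<Sum>x\<in>I. w x * (\<alpha>1 + \<beta>1 * t x)) \<le> \<nu>" unfolding \<nu>_def \<alpha>1_def \<beta>1_def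
      using w tangent_convex_at[of "t _" \<mu> p] tpos mu1 p by (intro sum_mono mult_left_mono) auto
    hence J: "\<mu> powr p \<le> \<nu>" unfolding sum_lin w1 \<mu>_def[symmetric] ab1[symmetric] by simp
    have "\<nu> \<le> (\<Sum>x\<in>I. w x * (\<alpha>2 + \<beta>2 * t x))" unfolding \<nu>_def \<alpha>2_def \<beta>2_def
      using w chord_convex[OF h, of p "t _"] t p by (intro sum_mono mult_left_mono) auto
    hence Ch: "\<nu> \<le> \<alpha>2 + \<beta>2 * \<mu>" unfolding sum_lin w1 \<mu>_def[symmetric] by simp
    show ?thesis
    proof (cases "p = 1")
      case True thus ?thesis using p1 mu1 by simp
    next
      case False
      hence "p > 1 \<or> p < 0" using p by auto
      from kant_line_convex[OF h this, of \<mu>] mu1 have "\<alpha>2 + \<beta>2 * \<mu> \<le> Kant h p * \<mu> powr p"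
        unfolding \<alpha>2_def \<beta>2_def by simp
      thus ?thesis using J Ch by simp
    qed
  qed
  show "(0 < p \<and> p \<le> 1) \<Longrightarrow> Kant h p * \<mu> powr p \<le> \<nu> \<and> \<nu> \<le> \<mu> powr p"
  proof -
    assume p: "0 < p \<and> p \<le> 1"
    have "\<nu> \<le> (\<Sum>x\<in>I. w x * (\<alpha>1 + \<beta>1 * t x))" unfolding \<nu>_def \<alpha>1_def \<beta>1_def
      using w tangent_concave_at[of "t _" \<mu> p] tpos mu1 p by (intro sum_mono mult_left_mono) auto
    hence J: "\<nu> \<le> \<mu> powr p" unfolding sum_lin w1 \<mu>_def[symmetric] ab1[symmetric] by simp
    have "(\<Sum>x\<in>I. w x * (\<alpha>2 + \<beta>2 * t x)) \<le> \<nu>" unfolding \<nu>_def \<alpha>2_def \<beta>2_def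
      using w chord_concave[OF h, of p "t _"] t p by (intro sum_mono mult_left_mono) auto
    hence Ch: "\<alpha>2 + \<beta>2 * \<mu> \<le> \<nu>" unfolding sum_lin w1 \<mu>_def[symmetric] by simp
    show ?thesis
    proof (cases "p = 1")
      case True thus ?thesis using p1 mu1 by simp
    next
      case False
      hence "0 < p" "p < 1" using p by auto
      from kant_line_concave[OF h this, of \<mu>] mu1 have "Kant h p * \<mu> powr p \<le> \<alpha>2 + \<beta>2 * \<mu>"
        unfolding \<alpha>2_def \<beta>2_def by simp
      thus ?thesis using J Ch by simp
    qed
  qed
qed

lemma pow_inv: fixes x p :: real shows "x > 0 \<Longrightarrow> p \<noteq> 0 \<Longrightarrow> (x powr p) powr (1 / p) = x"
  by (simp add: powr_powr)

lemma root_pos: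
  fixes \<mu> \<nu> K p :: real assumes "\<mu> > 0" "K > 0" "p > 0"
  shows "\<mu> powr p \<le> \<nu> \<Longrightarrow> \<mu> \<le> \<nu> powr (1 / p)"
    and "K * \<mu> powr p \<le> \<nu> \<Longrightarrow> K powr (1 / p) * \<mu> \<le> \<nu> powr (1 / p)"
    and "0 < \<nu> \<Longrightarrow> \<nu> \<le> \<mu> powr p \<Longrightarrow> \<nu> powr (1 / p) \<le> \<mu>"
    and "0 < \<nu> \<Longrightarrow> \<nu> \<le> K * \<mu> powr p \<Longrightarrow> \<nu> powr (1 / p) \<le> K powr (1 / p) * \<mu>"
proof -
  have e: "(K * \<mu> powr p) powr (1 / p) = K powr (1 / p) * \<mu>"
    using assms by (simp add: powr_mult pow_inv)
  show "\<mu> powr p \<le> \<nu> \<Longrightarrow> \<mu> \<le> \<nu> powr (1 / p)"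
    using powr_mono2[of "1 / p" "\<mu> powr p" \<nu>] assms by (simp add: pow_inv)
  show "K * \<mu> powr p \<le> \<nu> \<Longrightarrow> K powr (1 / p) * \<mu> \<le> \<nu> powr (1 / p)"
    using powr_mono2[of "1 / p" "K * \<mu> powr p" \<nu>] assms e by simp
  show "0 < \<nu> \<Longrightarrow> \<nu> \<le> \<mu> powr p \<Longrightarrow> \<nu> powr (1 / p) \<le> \<mu>"
    using powr_mono2[of "1 / p" \<nu> "\<mu> powr p"] assms by (simp add: pow_inv)
  show "0 < \<nu> \<Longrightarrow> \<nu> \<le> K * \<mu> powr p \<Longrightarrow> \<nu> powr (1 / p) \<le> K powr (1 / p) * \<mu>"
    using powr_mono2[of "1 / p" \<nu> "K * \<mu> powr p"] assms e by simp
qed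

lemma root_neg:
  fixes \<mu> \<nu> K p :: real assumes "\<mu> > 0" "K > 0" "p < 0"
  shows "\<mu> powr p \<le> \<nu> \<Longrightarrow> \<nu> powr (1 / p) \<le> \<mu>"
    and "0 < \<nu> \<Longrightarrow> \<nu> \<le> K * \<mu> powr p \<Longrightarrow> K powr (1 / p) * \<mu> \<le> \<nu> powr (1 / p)"
proof -
  have e: "(K * \<mu> powr p) powr (1 / p) = K powr (1 / p) * \<mu>"
    using assms by (simp add: powr_mult pow_inv)
  show "\<mu> powr p \<le> \<nu> \<Longrightarrow> \<nu> powr (1 / p) \<le> \<mu>"
    using powr_mono2'[of "1 / p" "\<mu> powr p" \<nu>] assms by (simp add: pow_inv)
  show "0 < \<nu> \<Longrightarrow> \<nu> \<le> K * \<mu> powr p \<Longrightarrow> K powr (1 / p) * \<mu> \<le> \<nu> powr (1 / p)"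
    using powr_mono2'[of "1 / p" \<nu> "K * \<mu> powr p"] assms e by simp
qed

lemma final_k:
  fixes w t :: "'a \<Rightarrow> real" and a b p N :: real
  assumes I: "finite I" and w: "\<And>x. x \<in> I \<Longrightarrow> 0 \<le> w x" and wN: "(\<Sum>x\<in>I. w x) = N" and N: "N > 0"
    and t: "\<And>x. x \<in> I \<Longrightarrow> a \<le> t x \<and> t x \<le> b" and a: "0 < a" and ab: "a < b" and p0: "p \<noteq> 0"
  defines "S \<equiv> (\<Sum>x\<in>I. w x * t x powr p)" and "T \<equiv> (\<Sum>x\<in>I. w x * t x)"
    and "K \<equiv> Kant (b / a) p" and "L \<equiv> N powr (1 / p) / N * (\<Sum>x\<in>I. w x * t x)"
  shows "p \<ge> 1 \<Longrightarrow> L \<le> S powr (1 / p) \<and> S powr (1 / p) \<le> K powr (1 / p) * L"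
    and "p < 1 \<Longrightarrow> K powr (1 / p) * L \<le> S powr (1 / p) \<and> S powr (1 / p) \<le> L"
proof -
  define h where "h = b / a"
  have h: "h > 1" unfolding h_def using a ab by simp
  have K: "K > 0" unfolding K_def using kant_pos[OF h p0] h_def by simp
  define w' where "w' x = w x / N" for x
  define t' where "t' x = t x / a" for x
  have w': "x \<in> I \<Longrightarrow> 0 \<le> w' x" for x unfolding w'_def using w N by simp
  have w'1: "(\<Sum>x\<in>I. w' x) = 1" unfolding w'_def using wN N by (simp add: sum_divide_distrib[symmetric])
  have t': "x \<in> I \<Longrightarrow> 1 \<le> t' x \<and> t' x \<le> h" for x unfolding t'_def h_def using t a
    by (auto simp: divide_simps)
  define \<mu> where "\<mu> = T / N"
  define \<nu> where "\<nu> = S / N"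
  have mu': "(\<Sum>x\<in>I. w' x * t' x) = \<mu> / a" unfolding \<mu>_def T_def w'_def t'_def
    by (simp add: sum_divide_distrib[symmetric])
  have nu': "(\<Sum>x\<in>I. w' x * t' x powr p) = \<nu> / a powr p" unfolding \<nu>_def S_def w'_def t'_def
    using t a by (simp add: sum_divide_distrib[symmetric] powr_divide)
  have "T \<ge> (\<Sum>x\<in>I. w x * a)" unfolding T_def using w t by (intro sum_mono mult_left_mono) auto
  hence "T \<ge> N * a" using wN by (simp add: sum_distrib_right[symmetric])
  hence mu: "\<mu> > 0" unfolding \<mu>_def using N a by (simp add: field_simps) (smt (verit) mult_pos_pos)
  have ap: "a powr p > 0" using a by simp
  have mup: "(\<mu> / a) powr p = \<mu> powr p / a powr p" using mu a by (simp add: powr_divide)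
  have SL: "S powr (1 / p) = N powr (1 / p) * \<nu> powr (1 / p)" if "\<nu> \<ge> 0"
    unfolding \<nu>_def using N that \<nu>_def by (simp add: powr_mult[symmetric])
  have L: "L = N powr (1 / p) * \<mu>" unfolding L_def \<mu>_def T_def by simp
  have Np: "N powr (1 / p) > 0" using N by simp
  note wn = weighted_norm[where I=I and w=w' and t=t' and h=h and p=p, OF I w' w'1 t' h, unfolded mu' nu' mup]
  show "p \<ge> 1 \<Longrightarrow> L \<le> S powr (1 / p) \<and> S powr (1 / p) \<le> K powr (1 / p) * L"
  proof -
    assume p: "p \<ge> 1"
    from wn(1) p have "\<mu> powr p / a powr p \<le> \<nu> / a powr p \<and> \<nu> / a powr p \<le> K * (\<mu> powr p / a powr p)"
      unfolding K_def h_def by simp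
    hence i: "\<mu> powr p \<le> \<nu>" "\<nu> \<le> K * \<mu> powr p" using ap by (auto simp: divide_simps)
    have nu: "\<nu> > 0" using i(1) mu by (smt (verit) powr_gt_zero)
    have "\<mu> \<le> \<nu> powr (1 / p)" "\<nu> powr (1 / p) \<le> K powr (1 / p) * \<mu>"
      using root_pos(1)[OF mu K, of p] root_pos(4)[OF mu K, of p] i nu p by auto
    thus ?thesis unfolding L SL[OF less_imp_le[OF nu]] using Np by (simp add: mult_left_mono)
  qed
  show "p < 1 \<Longrightarrow> K powr (1 / p) * L \<le> S powr (1 / p) \<and> S powr (1 / p) \<le> L"
  proof -
    assume p: "p < 1"
    show ?thesis
    proof (cases "p > 0")
      case True
      from wn(2) p True have "K * (\<mu> powr p / a powr p) \<le> \<nu> / a powr p \<and> \<nu> / a powr p \<le> \<mu> powr p / a powr p"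
        unfolding K_def h_def by simp
      hence i: "K * \<mu> powr p \<le> \<nu>" "\<nu> \<le> \<mu> powr p" using ap by (auto simp: divide_simps)
      have nu: "\<nu> > 0" using i(1) mu K by (smt (verit) powr_gt_zero mult_pos_pos)
      have "K powr (1 / p) * \<mu> \<le> \<nu> powr (1 / p)" "\<nu> powr (1 / p) \<le> \<mu>"
        using root_pos(2)[OF mu K True] root_pos(3)[OF mu K True] i nu by auto
      thus ?thesis unfolding L SL[OF less_imp_le[OF nu]] using Np
        by (simp add: mult_left_mono mult.left_commute)
    next
      case False
      hence pn: "p < 0" using p0 by simp
      from wn(1) pn have "\<mu> powr p / a powr p \<le> \<nu> / a powr p \<and> \<nu> / a powr p \<le> K * (\<mu> powr p / a powr p)"
        unfolding K_def h_def by simp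
      hence i: "\<mu> powr p \<le> \<nu>" "\<nu> \<le> K * \<mu> powr p" using ap by (auto simp: divide_simps)
      have nu: "\<nu> > 0" using i(1) mu by (smt (verit) powr_gt_zero)
      have "\<nu> powr (1 / p) \<le> \<mu>" "K powr (1 / p) * \<mu> \<le> \<nu> powr (1 / p)"
        using root_neg(1)[OF mu K pn] root_neg(2)[OF mu K pn] i nu by auto
      thus ?thesis unfolding L SL[OF less_imp_le[OF nu]] using Np
        by (simp add: mult_left_mono mult.left_commute)
    qed
  qed
qed

lemma msum_carrier: "(\<And>i. i < k \<Longrightarrow> f i \<in> carrier_mat d d) \<Longrightarrow> msum d f k \<in> carrier_mat d d"
  by (induction k) auto

lemma cadj_add: "A \<in> carrier_mat n m \<Longrightarrow> B \<in> carrier_mat n m \<Longrightarrow> cadj (A + B) = cadj A + cadj B"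
  by (rule eq_matI) auto

lemma msum_herm: "(\<And>i. i < k \<Longrightarrow> f i \<in> carrier_mat d d \<and> cadj (f i) = f i) \<Longrightarrow> cadj (msum d f k) = msum d f k"
proof (induction k)
  case 0 show ?case by (rule eq_matI) auto
next
  case (Suc k)
  have c: "msum d f k \<in> carrier_mat d d" using Suc.prems by (intro msum_carrier) auto
  show ?case using Suc c by (simp add: cadj_add[of _ d d])
qed

lemma msum_conj: assumes Y: "Y \<in> carrier_mat d d" and Z: "Z \<in> carrier_mat d d"
  shows "(\<And>i. i < k \<Longrightarrow> f i \<in> carrier_mat d d) \<Longrightarrow> Y * msum d f k * Z = msum d (\<lambda>i. Y * f i * Z) k"
proof (induction k)
  case 0 show ?case using Y Z by simp
next
  case (Suc k)
  have c: "msum d f k \<in> carrier_mat d d" using Suc.prems by (intro msum_carrier) auto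
  have fk: "f k \<in> carrier_mat d d" using Suc.prems by auto
  have "Y * msum d f (Suc k) * Z = Y * msum d f k * Z + Y * f k * Z"
    using Y Z c fk by (simp add: mult_add_distrib_mat[of _ d d] add_mult_distrib_mat[of _ d d])
  thus ?case using Suc by simp
qed

lemma msum_index: "(\<And>i. i < k \<Longrightarrow> f i \<in> carrier_mat d d) \<Longrightarrow> r < d \<Longrightarrow> c < d \<Longrightarrow>
  msum d f k $$ (r,c) = (\<Sum>i<k. f i $$ (r,c))"
proof (induction k)
  case 0 thus ?case by simp
next
  case (Suc k)
  have cc: "msum d f k \<in> carrier_mat d d" using Suc.prems by (intro msum_carrier) auto
  have fk: "f k \<in> carrier_mat d d" using Suc.prems by auto
  have "msum d f (Suc k) $$ (r,c) = msum d f k $$ (r,c) + f k $$ (r,c)"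
    unfolding msum.simps by (rule index_add_mat(1)) (use fk Suc.prems in auto)
  also have "msum d f k $$ (r,c) = (\<Sum>i<k. f i $$ (r, c))" using Suc.IH Suc.prems by auto
  finally show ?case by simp
qed

lemma key:
  fixes d n :: nat and X :: "nat \<Rightarrow> complex mat" and a b p :: real
  assumes n: "n \<ge> 1" and a: "0 < a" and ab: "a < b" and p0: "p \<noteq> 0"
    and H: "\<And>i. i < n \<Longrightarrow> hermitian d (X i) \<and> (\<forall>v\<in>carrier_vec d.
        a * Re (conjugate v \<bullet> v) \<le> Re (qform (X i) v) \<and> Re (qform (X i) v) \<le> b * Re (conjugate v \<bullet> v))"
  defines "\<Phi> \<equiv> Re (mtrace (mat_powr d (msum d (\<lambda>i. mat_powr d (X i) p) n) (1 / p)))"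
    and "L \<equiv> real n powr (1 / p) / real n * (\<Sum>i<n. Re (mtrace (X i)))"
    and "K \<equiv> Kant (b / a) p"
  shows "p \<ge> 1 \<Longrightarrow> L \<le> \<Phi> \<and> \<Phi> \<le> K powr (1 / p) * L"
    and "p < 1 \<Longrightarrow> K powr (1 / p) * L \<le> \<Phi> \<and> \<Phi> \<le> L"
proof -
  have "\<forall>i. \<exists>Vl. i < n \<longrightarrow> unitary d (fst Vl) \<and> X i = fst Vl * rdiag d (snd Vl) * cadj (fst Vl)"
  proof
    fix i show "\<exists>Vl. i < n \<longrightarrow> unitary d (fst Vl) \<and> X i = fst Vl * rdiag d (snd Vl) * cadj (fst Vl)"
    proof (cases "i < n")
      case True
      hence "X i \<in> carrier_mat d d" "cadj (X i) = X i" using H[OF True] unfolding hermitian_def by auto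
      from spectral[OF this] obtain V l where "unitary d V" "X i = V * rdiag d l * cadj V" by blast
      thus ?thesis by (intro exI[of _ "(V, l)"]) auto
    qed auto
  qed
  from choice[OF this] obtain Vl where Vl: "\<And>i. i < n \<Longrightarrow> unitary d (fst (Vl i)) \<and> X i = fst (Vl i) * rdiag d (snd (Vl i)) * cadj (fst (Vl i))"
    by blast
  define V where "V i = fst (Vl i)" for i
  define lam where "lam i = snd (Vl i)" for i
  have V: "i < n \<Longrightarrow> unitary d (V i)" for i using Vl unfolding V_def by blast
  have Xd: "i < n \<Longrightarrow> X i = V i * rdiag d (lam i) * cadj (V i)" for i using Vl unfolding V_def lam_def by blast
  have Xc: "i < n \<Longrightarrow> X i \<in> carrier_mat d d" for i using H[of i] unfolding hermitian_def by simp
  have lam_bd: "a \<le> lam i j \<and> lam i j \<le> b" if i: "i < n" and j: "j < d" for i j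
  proof -
    define v where "v = col (V i) j"
    have "dim_row (V i) = d" using unitaryD(1)[OF V[OF i]] by auto
    hence vc: "v \<in> carrier_vec d" unfolding v_def using col_dim[of "V i" j] by simp
    have q: "qform (X i) v = complex_of_real (lam i j)" unfolding v_def Xd[OF i] using qform_decomp[OF V[OF i] j] .
    have nv: "conjugate v \<bullet> v = 1" unfolding v_def using col_norm[OF V[OF i] j] .
    have "a * Re (conjugate v \<bullet> v) \<le> Re (qform (X i) v) \<and> Re (qform (X i) v) \<le> b * Re (conjugate v \<bullet> v)"
      using H[OF i] vc by blast
    thus ?thesis unfolding q nv by simp
  qed
  define P where "P i = mat_powr d (X i) p" for i
  have Pd: "i < n \<Longrightarrow> P i = V i * rdiag d (\<lambda>j. lam i j powr p) * cadj (V i)" for i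
    unfolding P_def by (rule mat_powr_eq[OF V Xd])
  have Ph: "i < n \<Longrightarrow> P i \<in> carrier_mat d d \<and> cadj (P i) = P i" for i
    using hermitian_decomp[OF V[of i], of "\<lambda>j. lam i j powr p"] Pd[of i] unfolding hermitian_def by auto
  have Pc: "i < n \<Longrightarrow> P i \<in> carrier_mat d d" for i using Ph by blast
  define S where "S = msum d P n"
  have Sc: "S \<in> carrier_mat d d" unfolding S_def using Pc by (intro msum_carrier)
  have Sh: "cadj S = S" unfolding S_def using Ph by (intro msum_herm)
  from spectral[OF Sc Sh] obtain U s where U: "unitary d U" and Sd: "S = U * rdiag d s * cadj U" by blast
  note Uc = unitaryD(1)[OF U]
  have Phi: "\<Phi> = (\<Sum>k<d. s k powr (1 / p))"
    unfolding \<Phi>_def P_def[symmetric] S_def[symmetric] mat_powr_eq[OF U Sd] mtrace_decomp[OF U] by simp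
  define w where "w i j k = (cmod ((cadj (V i) * U) $$ (j,k)))\<^sup>2" for i j k
  have wpos: "w i j k \<ge> 0" for i j k unfolding w_def by simp
  have wsum: "k < d \<Longrightarrow> i < n \<Longrightarrow> (\<Sum>j<d. w i j k) = 1" for i k
    unfolding w_def using weights_sum[OF unitary_mult[OF unitary_cadj[OF V[of i]] U]] by simp
  have cU: "cadj U * S * U = rdiag d s"
    unfolding Sd using unitaryD[OF U] by (simp add: assoc3[of _ d] unitary_cancel1_sq[OF U] del: mult_carrier_mat)
  have sk: "s k = (\<Sum>i<n. \<Sum>j<d. w i j k * lam i j powr p)" if k: "k < d" for k
  proof -
    have "complex_of_real (s k) = (cadj U * S * U) $$ (k,k)" unfolding cU using k by (simp add: mat_diag_def)
    also have "cadj U * S * U = msum d (\<lambda>i. cadj U * P i * U) n"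
      unfolding S_def using Pc Uc by (intro msum_conj) auto
    also have "\<dots> $$ (k,k) = (\<Sum>i<n. (cadj U * P i * U) $$ (k,k))"
      using Pc Uc k by (intro msum_index) auto
    also have "\<dots> = (\<Sum>i<n. complex_of_real (\<Sum>j<d. w i j k * lam i j powr p))"
    proof (intro sum.cong refl)
      fix i assume "i \<in> {..<n}" hence i: "i < n" by simp
      show "(cadj U * P i * U) $$ (k,k) = complex_of_real (\<Sum>j<d. w i j k * lam i j powr p)"
        unfolding Pd[OF i] w_def using diag_entry[OF U V[OF i] k] by simp
    qed
    also have "\<dots> = complex_of_real (\<Sum>i<n. \<Sum>j<d. w i j k * lam i j powr p)" by simp
    finally show ?thesis by (simp only: of_real_eq_iff)
  qed
  have trX: "Re (mtrace (X i)) = (\<Sum>k<d. \<Sum>j<d. w i j k * lam i j)" if i: "i < n" for i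
  proof -
    have "mtrace (X i) = mtrace (cadj U * X i * U)" using mtrace_conj[OF U Xc[OF i]] by simp
    also have "\<dots> = (\<Sum>k<d. (cadj U * X i * U) $$ (k,k))" unfolding mtrace_def using Uc Xc[OF i] by simp
    also have "\<dots> = (\<Sum>k<d. complex_of_real (\<Sum>j<d. w i j k * lam i j))"
    proof (intro sum.cong refl)
      fix k assume "k \<in> {..<d}" hence k: "k < d" by simp
      show "(cadj U * X i * U) $$ (k,k) = complex_of_real (\<Sum>j<d. w i j k * lam i j)"
        unfolding Xd[OF i] w_def using diag_entry[OF U V[OF i] k] by simp
    qed
    finally show ?thesis by simp
  qed
  define I where "I = {..<n} \<times> {..<d}"
  define W where "W k x = w (fst x) (snd x) k" for k x
  define t where "t x = lam (fst x) (snd x)" for x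
  have I: "finite I" unfolding I_def by simp
  have sumI: "(\<Sum>x\<in>I. f x) = (\<Sum>i<n. \<Sum>j<d. f (i,j))" for f :: "nat \<times> nat \<Rightarrow> real"
    unfolding I_def by (simp add: sum.cartesian_product)
  have WN: "k < d \<Longrightarrow> (\<Sum>x\<in>I. W k x) = real n" for k unfolding sumI W_def using wsum by simp
  have tI: "x \<in> I \<Longrightarrow> a \<le> t x \<and> t x \<le> b" for x unfolding I_def t_def using lam_bd by auto
  have nr: "real n > 0" using n by simp
  define Lk where "Lk k = real n powr (1 / p) / real n * (\<Sum>x\<in>I. W k x * t x)" for k
  have sI: "k < d \<Longrightarrow> s k = (\<Sum>x\<in>I. W k x * t x powr p)" for k unfolding sumI W_def t_def using sk by simp
  have LL: "L = (\<Sum>k<d. Lk k)"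
  proof -
    have "(\<Sum>i<n. Re (mtrace (X i))) = (\<Sum>i<n. \<Sum>k<d. \<Sum>j<d. w i j k * lam i j)" using trX by simp
    also have "\<dots> = (\<Sum>k<d. \<Sum>i<n. \<Sum>j<d. w i j k * lam i j)" by (rule sum.swap)
    also have "\<dots> = (\<Sum>k<d. \<Sum>x\<in>I. W k x * t x)" unfolding sumI W_def t_def by simp
    finally show ?thesis unfolding L_def Lk_def by (simp add: sum_distrib_left)
  qed
  have Wpos: "\<And>x. x \<in> I \<Longrightarrow> 0 \<le> W k x" for k unfolding W_def using wpos by simp
  have fk1: "Lk k \<le> s k powr (1 / p) \<and> s k powr (1 / p) \<le> K powr (1 / p) * Lk k" if k: "k < d" and p: "p \<ge> 1" for k
    using final_k(1)[where I=I and w="W k" and t=t and N="real n" and a=a and b=b and p=p,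
        OF I Wpos WN[OF k] nr tI a ab p0 p]
    unfolding Lk_def K_def sI[OF k] by simp
  have fk2: "K powr (1 / p) * Lk k \<le> s k powr (1 / p) \<and> s k powr (1 / p) \<le> Lk k" if k: "k < d" and p: "p < 1" for k
    using final_k(2)[where I=I and w="W k" and t=t and N="real n" and a=a and b=b and p=p,
        OF I Wpos WN[OF k] nr tI a ab p0 p]
    unfolding Lk_def K_def sI[OF k] by simp
  show "p \<ge> 1 \<Longrightarrow> L \<le> \<Phi> \<and> \<Phi> \<le> K powr (1 / p) * L"
  proof -
    assume p: "p \<ge> 1"
    have "\<And>k. k < d \<Longrightarrow> Lk k \<le> s k powr (1 / p) \<and> s k powr (1 / p) \<le> K powr (1 / p) * Lk k"
      using fk1 p by blast
    hence "(\<Sum>k<d. Lk k) \<le> (\<Sum>k<d. s k powr (1 / p)) \<and> (\<Sum>k<d. s k powr (1 / p)) \<le> (\<Sum>k<d. K powr (1 / p) * Lk k)"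
      by (auto intro!: sum_mono)
    thus ?thesis unfolding LL Phi by (simp add: sum_distrib_left)
  qed
  show "p < 1 \<Longrightarrow> K powr (1 / p) * L \<le> \<Phi> \<and> \<Phi> \<le> L"
  proof -
    assume p: "p < 1"
    have "\<And>k. k < d \<Longrightarrow> K powr (1 / p) * Lk k \<le> s k powr (1 / p) \<and> s k powr (1 / p) \<le> Lk k"
      using fk2 p by blast
    hence "(\<Sum>k<d. K powr (1 / p) * Lk k) \<le> (\<Sum>k<d. s k powr (1 / p)) \<and> (\<Sum>k<d. s k powr (1 / p)) \<le> (\<Sum>k<d. Lk k)"
      by (auto intro!: sum_mono)
    thus ?thesis unfolding LL Phi by (simp add: sum_distrib_left)
  qed
qed

lemma loewner_bounds:
  assumes lo: "loewner_le d (complex_of_real a \<cdot>\<^sub>m 1\<^sub>m d) X" and hi: "loewner_le d X (complex_of_real b \<cdot>\<^sub>m 1\<^sub>m d)"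
  shows "hermitian d X \<and> (\<forall>v\<in>carrier_vec d.
        a * Re (conjugate v \<bullet> v) \<le> Re (qform X v) \<and> Re (qform X v) \<le> b * Re (conjugate v \<bullet> v))"
proof -
  have hX: "hermitian d X" using lo unfolding loewner_le_def by simp
  have Xc: "X \<in> carrier_mat d d" using hX unfolding hermitian_def by simp
  have Ic: "c \<cdot>\<^sub>m 1\<^sub>m d \<in> carrier_mat d d" for c :: complex by simp
  have "a * Re (conjugate v \<bullet> v) \<le> Re (qform X v) \<and> Re (qform X v) \<le> b * Re (conjugate v \<bullet> v)"
    if v: "v \<in> carrier_vec d" for v
  proof -
    have "0 \<le> Re (qform (X - complex_of_real a \<cdot>\<^sub>m 1\<^sub>m d) v)"
      using lo v unfolding loewner_le_def pos_semidef_def by blast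
    also have "qform (X - complex_of_real a \<cdot>\<^sub>m 1\<^sub>m d) v = qform X v - complex_of_real a * (conjugate v \<bullet> v)"
      using qform_minus[OF Xc Ic v] qform_smult_one[OF v] by simp
    finally have 1: "a * Re (conjugate v \<bullet> v) \<le> Re (qform X v)" by simp
    have "0 \<le> Re (qform (complex_of_real b \<cdot>\<^sub>m 1\<^sub>m d - X) v)"
      using hi v unfolding loewner_le_def pos_semidef_def by blast
    also have "qform (complex_of_real b \<cdot>\<^sub>m 1\<^sub>m d - X) v = complex_of_real b * (conjugate v \<bullet> v) - qform X v"
      using qform_minus[OF Ic Xc v] qform_smult_one[OF v] by simp
    finally have 2: "Re (qform X v) \<le> b * Re (conjugate v \<bullet> v)" by simp
    show ?thesis using 1 2 by simp
  qed
  thus ?thesis using hX by blast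
qed

lemma bounds_add:
  assumes X: "hermitian d X \<and> (\<forall>v\<in>carrier_vec d.
        a * Re (conjugate v \<bullet> v) \<le> Re (qform X v) \<and> Re (qform X v) \<le> b * Re (conjugate v \<bullet> v))"
    and Y: "hermitian d Y \<and> (\<forall>v\<in>carrier_vec d.
        a * Re (conjugate v \<bullet> v) \<le> Re (qform Y v) \<and> Re (qform Y v) \<le> b * Re (conjugate v \<bullet> v))"
  shows "hermitian d (X + Y) \<and> (\<forall>v\<in>carrier_vec d.
        (2 * a) * Re (conjugate v \<bullet> v) \<le> Re (qform (X + Y) v) \<and> Re (qform (X + Y) v) \<le> (2 * b) * Re (conjugate v \<bullet> v))"
proof -
  have Xc: "X \<in> carrier_mat d d" and Yc: "Y \<in> carrier_mat d d" using X Y unfolding hermitian_def by auto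
  have "hermitian d (X + Y)" using X Y Xc Yc unfolding hermitian_def by (simp add: cadj_add[of _ d d])
  moreover have "(2 * a) * Re (conjugate v \<bullet> v) \<le> Re (qform (X + Y) v) \<and> Re (qform (X + Y) v) \<le> (2 * b) * Re (conjugate v \<bullet> v)"
    if v: "v \<in> carrier_vec d" for v
  proof -
    have "a * Re (conjugate v \<bullet> v) \<le> Re (qform X v) \<and> Re (qform X v) \<le> b * Re (conjugate v \<bullet> v)"
      using X v by blast
    moreover have "a * Re (conjugate v \<bullet> v) \<le> Re (qform Y v) \<and> Re (qform Y v) \<le> b * Re (conjugate v \<bullet> v)"
      using Y v by blast
    ultimately show ?thesis using qform_add[OF Xc Yc v] by simp
  qed
  ultimately show ?thesis by blast
qed

theorem corollary4p9:
  fixes d n :: nat and A B :: "nat \<Rightarrow> complex mat" and m M :: real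
  assumes "n \<ge> 1"
    and "0 < m" and "m < M"
    and "\<And>i. i < n \<Longrightarrow> pos_def d (A i) \<and> pos_def d (B i)"
    and "\<And>i. i < n \<Longrightarrow> loewner_le d (m \<cdot>\<^sub>m 1\<^sub>m d) (A i) \<and> loewner_le d (A i) (M \<cdot>\<^sub>m 1\<^sub>m d)"
    and "\<And>i. i < n \<Longrightarrow> loewner_le d (m \<cdot>\<^sub>m 1\<^sub>m d) (B i) \<and> loewner_le d (B i) (M \<cdot>\<^sub>m 1\<^sub>m d)"
  defines "h \<equiv> M / m"
  defines "TA \<equiv> \<lambda>p. Re (mtrace (mat_powr d (msum d (\<lambda>i. mat_powr d (A i) p) n) (1 / p)))"
  defines "TB \<equiv> \<lambda>p. Re (mtrace (mat_powr d (msum d (\<lambda>i. mat_powr d (B i) p) n) (1 / p)))"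
  defines "TAB \<equiv> \<lambda>p. Re (mtrace (mat_powr d (msum d (\<lambda>i. mat_powr d (A i + B i) p) n) (1 / p)))"
  shows "(\<forall>p::real. p \<le> 1 \<and> p \<noteq> 0 \<longrightarrow>
            Kant h p powr (1 / p) * (TA p + TB p) \<le> TAB p \<and>
            TAB p \<le> Kant h p powr (- 1 / p) * (TA p + TB p))
       \<and> (\<forall>p::real. p \<ge> 1 \<longrightarrow>
            Kant h p powr (- 1 / p) * (TA p + TB p) \<le> TAB p \<and>
            TAB p \<le> Kant h p powr (1 / p) * (TA p + TB p))"
proof -
  note n = assms(1) and m = assms(2) and mM = assms(3)
  have HA: "\<And>i. i < n \<Longrightarrow> hermitian d (A i) \<and> (\<forall>v\<in>carrier_vec d.
        m * Re (conjugate v \<bullet> v) \<le> Re (qform (A i) v) \<and> Re (qform (A i) v) \<le> M * Re (conjugate v \<bullet> v))"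
    using assms(5) loewner_bounds by blast
  have HB: "\<And>i. i < n \<Longrightarrow> hermitian d (B i) \<and> (\<forall>v\<in>carrier_vec d.
        m * Re (conjugate v \<bullet> v) \<le> Re (qform (B i) v) \<and> Re (qform (B i) v) \<le> M * Re (conjugate v \<bullet> v))"
    using assms(6) loewner_bounds by blast
  have HAB: "\<And>i. i < n \<Longrightarrow> hermitian d (A i + B i) \<and> (\<forall>v\<in>carrier_vec d.
        (2 * m) * Re (conjugate v \<bullet> v) \<le> Re (qform (A i + B i) v) \<and> Re (qform (A i + B i) v) \<le> (2 * M) * Re (conjugate v \<bullet> v))"
    using HA HB bounds_add by blast
  have hh: "(2 * M) / (2 * m) = h" unfolding h_def by simp
  have h1: "h > 1" unfolding h_def using m mM by simp
  define LA where "LA p = real n powr (1 / p) / real n * (\<Sum>i<n. Re (mtrace (A i)))" for p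
  define LB where "LB p = real n powr (1 / p) / real n * (\<Sum>i<n. Re (mtrace (B i)))" for p
  define LAB where "LAB p = real n powr (1 / p) / real n * (\<Sum>i<n. Re (mtrace (A i + B i)))" for p
  have Ac: "i < n \<Longrightarrow> A i \<in> carrier_mat d d" for i using HA unfolding hermitian_def by blast
  have Bc: "i < n \<Longrightarrow> B i \<in> carrier_mat d d" for i using HB unfolding hermitian_def by blast
  have Lsum: "LAB p = LA p + LB p" for p
  proof -
    have "(\<Sum>i<n. Re (mtrace (A i + B i))) = (\<Sum>i<n. Re (mtrace (A i)) + Re (mtrace (B i)))"
    proof (intro sum.cong refl)
      fix i assume "i \<in> {..<n}" hence i: "i < n" by simp
      show "Re (mtrace (A i + B i)) = Re (mtrace (A i)) + Re (mtrace (B i))"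
        using mtrace_add[OF Ac[OF i] Bc[OF i]] by simp
    qed
    thus ?thesis unfolding LAB_def LA_def LB_def by (simp add: sum.distrib distrib_left)
  qed
  have m2: "0 < 2 * m" "2 * m < 2 * M" using m mM by auto
  have kA1: "LA p \<le> TA p \<and> TA p \<le> Kant h p powr (1 / p) * LA p" if p: "p \<ge> 1" for p
  proof -
    have p0: "p \<noteq> 0" using p by simp
    show ?thesis using key(1)[where d=d and n=n and X=A and a=m and b=M and p=p, OF n m mM p0 HA p]
      unfolding TA_def LA_def h_def by simp
  qed
  have kA2: "Kant h p powr (1 / p) * LA p \<le> TA p \<and> TA p \<le> LA p" if p: "p < 1" "p \<noteq> 0" for p
    using key(2)[where d=d and n=n and X=A and a=m and b=M and p=p, OF n m mM p(2) HA p(1)]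
    unfolding TA_def LA_def h_def by simp
  have kB1: "LB p \<le> TB p \<and> TB p \<le> Kant h p powr (1 / p) * LB p" if p: "p \<ge> 1" for p
  proof -
    have p0: "p \<noteq> 0" using p by simp
    show ?thesis using key(1)[where d=d and n=n and X=B and a=m and b=M and p=p, OF n m mM p0 HB p]
      unfolding TB_def LB_def h_def by simp
  qed
  have kB2: "Kant h p powr (1 / p) * LB p \<le> TB p \<and> TB p \<le> LB p" if p: "p < 1" "p \<noteq> 0" for p
    using key(2)[where d=d and n=n and X=B and a=m and b=M and p=p, OF n m mM p(2) HB p(1)]
    unfolding TB_def LB_def h_def by simp
  have kAB1: "LAB p \<le> TAB p \<and> TAB p \<le> Kant h p powr (1 / p) * LAB p" if p: "p \<ge> 1" for p
  proof -
    have p0: "p \<noteq> 0" using p by simp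
    show ?thesis using key(1)[where d=d and n=n and X="\<lambda>i. A i + B i" and a="2 * m" and b="2 * M" and p=p, OF n m2 p0 HAB p]
      unfolding TAB_def LAB_def hh by simp
  qed
  have kAB2: "Kant h p powr (1 / p) * LAB p \<le> TAB p \<and> TAB p \<le> LAB p" if p: "p < 1" "p \<noteq> 0" for p
    using key(2)[where d=d and n=n and X="\<lambda>i. A i + B i" and a="2 * m" and b="2 * M" and p=p, OF n m2 p(2) HAB p(1)]
    unfolding TAB_def LAB_def hh by simp
  show ?thesis
  proof (rule conjI; intro allI impI)
    fix p :: real assume p: "p \<le> 1 \<and> p \<noteq> 0"
    let ?c = "Kant h p powr (1 / p)"
    have p0: "p \<noteq> 0" using p by simp
    have c: "?c > 0" using kant_pos[OF h1 p0] by simp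
    have ci: "Kant h p powr (- 1 / p) = 1 / ?c"
      using kant_pos[OF h1 p0] by (simp only: minus_divide_left[symmetric] powr_minus inverse_eq_divide)
    show "?c * (TA p + TB p) \<le> TAB p \<and> TAB p \<le> Kant h p powr (- 1 / p) * (TA p + TB p)"
    proof (cases "p = 1")
      case True
      have "LA p \<le> TA p \<and> TA p \<le> ?c * LA p" "LB p \<le> TB p \<and> TB p \<le> ?c * LB p"
        "LAB p \<le> TAB p \<and> TAB p \<le> ?c * LAB p"
        using kA1[of p] kB1[of p] kAB1[of p] True by auto
      moreover have "?c = 1" using True by (simp add: Kant_def)
      ultimately show ?thesis unfolding ci Lsum by simp
    next
      case False
      hence p1: "p < 1" using p by simp
      have a: "?c * LA p \<le> TA p" "TA p \<le> LA p" "?c * LB p \<le> TB p" "TB p \<le> LB p"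
        "?c * LAB p \<le> TAB p" "TAB p \<le> LAB p"
        using kA2[of p] kB2[of p] kAB2[of p] p1 p by auto
      have "?c * (TA p + TB p) \<le> ?c * (LA p + LB p)" using a c by (intro mult_left_mono) auto
      also have "\<dots> = ?c * LAB p" unfolding Lsum ..
      finally have lo: "?c * (TA p + TB p) \<le> TAB p" using a by simp
      have "LA p \<le> TA p / ?c" "LB p \<le> TB p / ?c" using a c by (auto simp: field_simps)
      hence "LAB p \<le> 1 / ?c * (TA p + TB p)" unfolding Lsum by (simp add: add_divide_distrib)
      hence "TAB p \<le> 1 / ?c * (TA p + TB p)" using a by simp
      thus ?thesis using lo unfolding ci by simp
    qed
  next
    fix p :: real assume p: "p \<ge> 1"
    let ?c = "Kant h p powr (1 / p)"
    have p0: "p \<noteq> 0" using p by simp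
    have c: "?c > 0" using kant_pos[OF h1 p0] by simp
    have ci: "Kant h p powr (- 1 / p) = 1 / ?c"
      using kant_pos[OF h1 p0] by (simp only: minus_divide_left[symmetric] powr_minus inverse_eq_divide)
    have a: "LA p \<le> TA p" "TA p \<le> ?c * LA p" "LB p \<le> TB p" "TB p \<le> ?c * LB p"
      "LAB p \<le> TAB p" "TAB p \<le> ?c * LAB p"
      using kA1[of p] kB1[of p] kAB1[of p] p by auto
    have "TAB p \<le> ?c * (LA p + LB p)" using a unfolding Lsum by simp
    also have "\<dots> \<le> ?c * (TA p + TB p)" using a c by (intro mult_left_mono) auto
    finally have hi: "TAB p \<le> ?c * (TA p + TB p)" .
    have "TA p / ?c \<le> LA p" "TB p / ?c \<le> LB p" using a c by (auto simp: field_simps)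
    hence "1 / ?c * (TA p + TB p) \<le> LAB p" unfolding Lsum by (simp add: add_divide_distrib)
    hence "1 / ?c * (TA p + TB p) \<le> TAB p" using a by simp
    thus "Kant h p powr (- 1 / p) * (TA p + TB p) \<le> TAB p \<and> TAB p \<le> ?c * (TA p + TB p)"
      using hi unfolding ci by simp
  qed
qed

end
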